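(* Assume the setting below with $h$ taking values in $[0,1]$, $n\ge 2m$, and $\delta\in(0,1)$. If $\eta$ is symmetric, then each of the following inequalities holds with probability at least $1-\delta$: \[ \sqrt{W_{n}}\le\sqrt{\sigma^{2}}+\left(\frac{\sqrt{2}}{2}+\frac{\sqrt{6}}{6}\right)\sqrt{\frac{1}{\lfloor n/(2m)\rfloor}\log\frac{1}{\delta}}, \] \[ \sqrt{\sigma^{2}}\le\sqrt{W_{n}}+\left(\frac{\sqrt{2}}{2}+\frac{\sqrt{42}}{6}\right)\sqrt{\frac{1}{\lfloor n/(2m)\rfloor}\log\frac{1}{\delta}}. \] Moreover, without any symmetry assumption on $\eta$, both inequalities hold (each with probability at least $1-\delta$) with $W_n$ replaced by $\tilde W_n$.
   Context: Let $\mathbb{X}\subseteq\mathbb{R}^d$ and let $\bm X_1,\dots,\bm X_n\in\mathbb{X}$ be IID with law $F$. Let $m\ge1$ and let $h:\mathbb{X}^m\to[0,1]$ be a measurable symmetric kernel of order $m$ (invariant under every permutation of its $m$ arguments). Set $\sigma^2=\mathbb{V}_F h(\bm X_1,\dots,\bm X_m)$. Define \[ \eta(\bm x_1,\dots,\bm x_{2m})=\tfrac12\left[h(\bm x_1,\dots,\bm x_m)-h(\bm x_{m+1},\dots,\bm x_{2m})\right]^2 , \] call $\eta$ symmetric if it is invariant under every permutation of its $2m$ arguments, and let \[ \tilde\eta(\bm x_1,\dots,\bm x_{2m})=\frac{1}{(2m)!}\sum_{\pi\in\Pi_{2m}}\eta(\bm x_{\pi(1)},\dots,\bm x_{\pi(2m)}),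 \] where $\Pi_{2m}$ is the set of permutations of $\{1,\dots,2m\}$. Let $\mathbb{K}_{2m}$ be the set of all $2m$-element subsets $\{\kappa(1)<\dots<\kappa(2m)\}$ of $\{1,\dots,n\}$, and \[ W_n=\binom{n}{2m}^{-1}\sum_{\kappa\in\mathbb{K}_{2m}}\eta(\bm X_{\kappa(1)},\dots,\bm X_{\kappa(2m)}),\qquad \tilde W_n=\binom{n}{2m}^{-1}\sum_{\kappa\in\mathbb{K}_{2m}}\tilde\eta(\bm X_{\kappa(1)},\dots,\bm X_{\kappa(2m)}). \] $\lfloor\cdot\rfloor$ is the floor function. *)

theory Defs
  imports "HOL-Probability.Probability" "HOL-Combinatorics.Permutations"
begin

text \<open>A data point tuple of length k is represented as a function nat => 'x,
  only the arguments 0..<k matter. The kernel h of order m is applied to the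
  restriction of such a tuple to {..<m}.\<close>

definition kernel_symmetric :: "nat \<Rightarrow> ((nat \<Rightarrow> 'x) \<Rightarrow> real) \<Rightarrow> bool" where
  "kernel_symmetric k g \<longleftrightarrow>
     (\<forall>x \<pi>. \<pi> permutes {..<k} \<longrightarrow> g (restrict (x \<circ> \<pi>) {..<k}) = g (restrict x {..<k}))"

definition eta :: "nat \<Rightarrow> ((nat \<Rightarrow> 'x) \<Rightarrow> real) \<Rightarrow> (nat \<Rightarrow> 'x) \<Rightarrow> real" where
  "eta m h x = (1/2) * (h (restrict x {..<m}) - h (restrict (\<lambda>i. x (m + i)) {..<m}))\<^sup>2"

definition eta_tilde :: "nat \<Rightarrow> ((nat \<Rightarrow> 'x) \<Rightarrow> real) \<Rightarrow> (nat \<Rightarrow> 'x) \<Rightarrow> real" where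
  "eta_tilde m h x =
     (1 / fact (2*m)) * (\<Sum>\<pi>\<in>{\<pi>. \<pi> permutes {..<2*m}}. eta m h (x \<circ> \<pi>))"

definition ustat :: "nat \<Rightarrow> nat \<Rightarrow> ((nat \<Rightarrow> 'x) \<Rightarrow> real) \<Rightarrow> (nat \<Rightarrow> 'a \<Rightarrow> 'x) \<Rightarrow> 'a \<Rightarrow> real" where
  "ustat n k g X \<omega> =
     (\<Sum>K\<in>{K. K \<subseteq> {..<n} \<and> card K = k}.
        g (\<lambda>j. X (sorted_list_of_set K ! j) \<omega>)) / real (n choose k)"

end

theory Submission
  imports Defs
begin

lemma (in prob_space) mgf_block:
  fixes Y :: "nat \<Rightarrow> 'a \<Rightarrow> real"
  assumes indep: "indep_vars (\<lambda>_. borel) Y {..<k}"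
    and rng: "\<And>j \<omega>. j < k \<Longrightarrow> \<omega> \<in> space M \<Longrightarrow> Y j \<omega> \<in> {0..1/2}"
    and mean: "\<And>j. j < k \<Longrightarrow> expectation (Y j) = \<mu>"
    and ineq: "\<And>y. y \<in> {0..1/2} \<Longrightarrow> exp (c * y) \<le> 1 + a * y"
  shows "expectation (\<lambda>\<omega>. exp (c * (\<Sum>j<k. Y j \<omega>))) \<le> exp (real k * a * \<mu>)"
proof -
  have rv[measurable]: "j < k \<Longrightarrow> Y j \<in> borel_measurable M" for j
    using indep unfolding indep_vars_def by auto
  have intY: "j < k \<Longrightarrow> integrable M (Y j)" for j
    by (rule integrable_const_bound[where B="1/2"]) (use rng in auto)
  have intE: "integrable M (\<lambda>\<omega>. exp (c * Y j \<omega>))" if j: "j < k" for j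
  proof (rule integrable_const_bound[where B="exp (\<bar>c\<bar>)"])
    show "AE x in M. norm (exp (c * Y j x)) \<le> exp \<bar>c\<bar>"
    proof (rule AE_I2)
      fix x assume x: "x \<in> space M"
      have "\<bar>Y j x\<bar> \<le> 1" using rng[OF j x] by auto
      hence "\<bar>c\<bar> * \<bar>Y j x\<bar> \<le> \<bar>c\<bar>" by (rule mult_left_le) simp
      hence "c * Y j x \<le> \<bar>c\<bar>" by (metis abs_ge_self abs_mult order_trans)
      thus "norm (exp (c * Y j x)) \<le> exp \<bar>c\<bar>" by simp
    qed
  qed (use j in auto)
  have "expectation (\<lambda>\<omega>. exp (c * (\<Sum>j<k. Y j \<omega>))) = expectation (\<lambda>\<omega>. \<Prod>j<k. exp (c * Y j \<omega>))"
    by (simp add: sum_distrib_left exp_sum)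
  also have "\<dots> = (\<Prod>j<k. expectation (\<lambda>\<omega>. exp (c * Y j \<omega>)))"
    by (rule indep_vars_lebesgue_integral[of "{..<k}" "\<lambda>j \<omega>. exp (c * Y j \<omega>)"])
       (auto intro: intE indep_vars_compose2[OF indep])
  also have "\<dots> \<le> (\<Prod>j<k. exp (a * \<mu>))"
  proof (rule prod_mono)
    fix j assume j: "j \<in> {..<k}"
    have 0: "0 \<le> expectation (\<lambda>\<omega>. exp (c * Y j \<omega>))"
      by (intro Bochner_Integration.integral_nonneg) simp
    have "expectation (\<lambda>\<omega>. exp (c * Y j \<omega>)) \<le> expectation (\<lambda>\<omega>. 1 + a * Y j \<omega>)"
      by (rule integral_mono) (use j intE intY ineq rng in auto)
    also have "\<dots> = 1 + a * \<mu>" using j intY mean by (simp add: prob_space)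
    also have "\<dots> \<le> exp (a * \<mu>)" by simp
    finally show "0 \<le> expectation (\<lambda>\<omega>. exp (c * Y j \<omega>)) \<and> expectation (\<lambda>\<omega>. exp (c * Y j \<omega>)) \<le> exp (a * \<mu>)"
      using 0 by simp
  qed
  also have "\<dots> = exp (real k * a * \<mu>)"
    by (simp add: exp_of_nat_mult[symmetric] mult.assoc)
  finally show ?thesis .
qed

lemma exp_neg_bound:
  fixes x :: real assumes "0 \<le> x"
  shows "exp (- x) \<le> 1 - x + x\<^sup>2 / 2"
proof -
  let ?f = "\<lambda>t::real. 1 - t + t\<^sup>2 / 2 - exp (- t)"
  have "?f 0 \<le> ?f x"
  proof (rule DERIV_nonneg_imp_nondecreasing[OF assms])
    fix t :: real assume "0 \<le> t" "t \<le> x"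
    have "DERIV ?f t :> (- 1 + t + exp (- t))"
      by (auto intro!: derivative_eq_intros)
    moreover have "- 1 + t + exp (- t) \<ge> 0"
      using exp_ge_add_one_self[of "- t"] by linarith
    ultimately show "\<exists>y. DERIV ?f t :> y \<and> y \<ge> 0" by blast
  qed
  thus ?thesis by simp
qed

lemma (in prob_space) mgf_avg:
  fixes S :: "'p \<Rightarrow> 'a \<Rightarrow> real"
  assumes fin: "finite P" "P \<noteq> {}"
    and meas: "\<And>p. p \<in> P \<Longrightarrow> S p \<in> borel_measurable M"
    and bnd: "\<And>p \<omega>. p \<in> P \<Longrightarrow> \<omega> \<in> space M \<Longrightarrow> \<bar>S p \<omega>\<bar> \<le> D"
    and mgf: "\<And>p. p \<in> P \<Longrightarrow> expectation (\<lambda>\<omega>. exp (c * S p \<omega>)) \<le> B"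
  shows "expectation (\<lambda>\<omega>. exp (c * ((\<Sum>p\<in>P. S p \<omega>) / real (card P)))) \<le> B"
    and "integrable M (\<lambda>\<omega>. exp (c * ((\<Sum>p\<in>P. S p \<omega>) / real (card P))))"
proof -
  have N: "real (card P) > 0" using fin by (simp add: card_gt_0_iff)
  have intS: "integrable M (\<lambda>\<omega>. exp (c * S p \<omega>))" if p: "p \<in> P" for p
  proof (rule integrable_const_bound[where B="exp (\<bar>c\<bar> * D)"])
    show "AE x in M. norm (exp (c * S p x)) \<le> exp (\<bar>c\<bar> * D)"
    proof (rule AE_I2)
      fix x assume x: "x \<in> space M"
      have "c * S p x \<le> \<bar>c\<bar> * \<bar>S p x\<bar>" by (metis abs_ge_self abs_mult)
      also have "\<dots> \<le> \<bar>c\<bar> * D" using bnd[OF p x] by (intro mult_left_mono) auto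
      finally show "norm (exp (c * S p x)) \<le> exp (\<bar>c\<bar> * D)" by simp
    qed
  qed (use p meas in auto)
  have meas2: "(\<lambda>\<omega>. exp (c * ((\<Sum>p\<in>P. S p \<omega>) / real (card P)))) \<in> borel_measurable M"
    using meas by measurable
  have pw: "exp (c * ((\<Sum>p\<in>P. S p \<omega>) / real (card P))) \<le> (\<Sum>p\<in>P. exp (c * S p \<omega>)) / real (card P)" for \<omega>
  proof -
    have "exp (\<Sum>p\<in>P. (1 / real (card P)) *\<^sub>R (c * S p \<omega>)) \<le> (\<Sum>p\<in>P. (1 / real (card P)) * exp (c * S p \<omega>))"
      by (rule convex_on_sum[OF fin exp_convex]) (use N in auto)
    moreover have "(\<Sum>p\<in>P. (1 / real (card P)) *\<^sub>R (c * S p \<omega>)) = c * ((\<Sum>p\<in>P. S p \<omega>) / real (card P))"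
      by (simp add: sum_distrib_left sum_divide_distrib)
    moreover have "(\<Sum>p\<in>P. (1 / real (card P)) * exp (c * S p \<omega>)) = (\<Sum>p\<in>P. exp (c * S p \<omega>)) / real (card P)"
      by (simp add: sum_divide_distrib)
    ultimately show ?thesis by simp
  qed
  have intsum: "integrable M (\<lambda>\<omega>. (\<Sum>p\<in>P. exp (c * S p \<omega>)) / real (card P))"
    using intS by auto
  show int: "integrable M (\<lambda>\<omega>. exp (c * ((\<Sum>p\<in>P. S p \<omega>) / real (card P))))"
    by (rule Bochner_Integration.integrable_bound[OF intsum meas2]) (use pw in \<open>auto intro!: AE_I2 order_trans[OF pw] simp: abs_of_nonneg sum_nonneg simp del: times_divide_eq_right\<close>)
  have "expectation (\<lambda>\<omega>. exp (c * ((\<Sum>p\<in>P. S p \<omega>) / real (card P)))) \<le>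
        expectation (\<lambda>\<omega>. (\<Sum>p\<in>P. exp (c * S p \<omega>)) / real (card P))"
    by (rule integral_mono[OF int intsum pw])
  also have "\<dots> = (\<Sum>p\<in>P. expectation (\<lambda>\<omega>. exp (c * S p \<omega>))) / real (card P)"
    using intS by (simp add: Bochner_Integration.integral_sum)
  also have "\<dots> \<le> (\<Sum>p\<in>P. B) / real (card P)"
    using mgf N by (intro divide_right_mono sum_mono) auto
  also have "\<dots> = B" using N by simp
  finally show "expectation (\<lambda>\<omega>. exp (c * ((\<Sum>p\<in>P. S p \<omega>) / real (card P)))) \<le> B" .
qed

lemma (in prob_space) chernoff_space_ge:
  assumes s: "s > 0" and meas: "f \<in> borel_measurable M"
    and int: "integrable M (\<lambda>x. exp (s * f x))"
  shows "prob {x\<in>space M. f x \<ge> a} \<le> exp (-s * a) * expectation (\<lambda>x. exp (s * f x))"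
proof -
  have si: "set_integrable M (space M) (\<lambda>x. exp (s * f x))"
    unfolding set_integrable_def
    by (rule Bochner_Integration.integrable_cong[THEN iffD1, OF refl _ int]) simp
  show ?thesis
    using Chernoff_ineq_ge[OF s si sets.top] set_integral_space[OF int] by simp
qed

lemma (in prob_space) chernoff_space_le:
  assumes s: "s > 0" and meas: "f \<in> borel_measurable M"
    and int: "integrable M (\<lambda>x. exp (-s * f x))"
  shows "prob {x\<in>space M. f x \<le> a} \<le> exp (s * a) * expectation (\<lambda>x. exp (-s * f x))"
proof -
  have si: "set_integrable M (space M) (\<lambda>x. exp (-s * f x))"
    unfolding set_integrable_def
    by (rule Bochner_Integration.integrable_cong[THEN iffD1, OF refl _ int]) simp
  show ?thesis
    using Chernoff_ineq_le[OF s si sets.top] set_integral_space[OF int] by simp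
qed

locale block_setting = prob_space +
  fixes P :: "'p set" and k :: nat and Y :: "'p \<Rightarrow> nat \<Rightarrow> 'a \<Rightarrow> real" and \<mu> :: real
    and W :: "'a \<Rightarrow> real"
  assumes fin: "finite P" "P \<noteq> {}" and kpos: "k > 0"
    and indep: "\<And>p. p \<in> P \<Longrightarrow> indep_vars (\<lambda>_. borel) (Y p) {..<k}"
    and rng: "\<And>p j \<omega>. p \<in> P \<Longrightarrow> j < k \<Longrightarrow> \<omega> \<in> space M \<Longrightarrow> Y p j \<omega> \<in> {0..1/2}"
    and mean: "\<And>p j. p \<in> P \<Longrightarrow> j < k \<Longrightarrow> expectation (Y p j) = \<mu>"
    and Wdef: "\<And>\<omega>. \<omega> \<in> space M \<Longrightarrow> W \<omega> = (\<Sum>p\<in>P. \<Sum>j<k. Y p j \<omega>) / (real (card P) * real k)"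
    and Wmeas: "W \<in> borel_measurable M"
begin

lemma Ymeas: "p \<in> P \<Longrightarrow> j < k \<Longrightarrow> Y p j \<in> borel_measurable M"
  using indep unfolding indep_vars_def by auto

lemma Smeas: "p \<in> P \<Longrightarrow> (\<lambda>\<omega>. \<Sum>j<k. Y p j \<omega>) \<in> borel_measurable M"
  using Ymeas by (intro borel_measurable_sum) auto

lemma Sbnd: "p \<in> P \<Longrightarrow> \<omega> \<in> space M \<Longrightarrow> \<bar>\<Sum>j<k. Y p j \<omega>\<bar> \<le> real k"
proof -
  assume p: "p \<in> P" and w: "\<omega> \<in> space M"
  have "\<bar>\<Sum>j<k. Y p j \<omega>\<bar> \<le> (\<Sum>j<k. \<bar>Y p j \<omega>\<bar>)" by (rule sum_abs)
  also have "\<dots> \<le> (\<Sum>j<k. 1)" using rng[OF p _ w] by (intro sum_mono) fastforce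
  finally show ?thesis by simp
qed

lemma mgf_W:
  assumes ineq: "\<And>y. y \<in> {0..1/2} \<Longrightarrow> exp (c * y) \<le> 1 + a * y"
  shows "expectation (\<lambda>\<omega>. exp (c * real k * W \<omega>)) \<le> exp (real k * a * \<mu>)"
    and "integrable M (\<lambda>\<omega>. exp (c * real k * W \<omega>))"
proof -
  have N: "real (card P) > 0" using fin by (simp add: card_gt_0_iff)
  have eq: "exp (c * real k * W \<omega>) = exp (c * ((\<Sum>p\<in>P. \<Sum>j<k. Y p j \<omega>) / real (card P)))"
    if "\<omega> \<in> space M" for \<omega>
    using Wdef[OF that] kpos N by (simp add: field_simps)
  have B: "expectation (\<lambda>\<omega>. exp (c * (\<Sum>j<k. Y p j \<omega>))) \<le> exp (real k * a * \<mu>)" if "p \<in> P" for p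
    by (rule mgf_block[OF indep[OF that] rng[OF that] mean[OF that] ineq])
  note A = mgf_avg[where S="\<lambda>p \<omega>. \<Sum>j<k. Y p j \<omega>" and c=c and B="exp (real k * a * \<mu>)" and P=P and D="real k",
     OF fin]
  have A2: "integrable M (\<lambda>\<omega>. exp (c * ((\<Sum>p\<in>P. \<Sum>j<k. Y p j \<omega>) / real (card P))))"
    by (rule A(2)) (use Smeas Sbnd B in auto)
  have A1: "expectation (\<lambda>\<omega>. exp (c * ((\<Sum>p\<in>P. \<Sum>j<k. Y p j \<omega>) / real (card P)))) \<le> exp (real k * a * \<mu>)"
    by (rule A(1)) (use Smeas Sbnd B in auto)
  show "integrable M (\<lambda>\<omega>. exp (c * real k * W \<omega>))"
    using A2 by (rule Bochner_Integration.integrable_cong[THEN iffD1, rotated 2]) (auto simp: eq)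
  have "expectation (\<lambda>\<omega>. exp (c * real k * W \<omega>)) =
      expectation (\<lambda>\<omega>. exp (c * ((\<Sum>p\<in>P. \<Sum>j<k. Y p j \<omega>) / real (card P))))"
    by (rule Bochner_Integration.integral_cong) (auto simp: eq)
  also have "\<dots> \<le> exp (real k * a * \<mu>)" using A1 .
  finally show "expectation (\<lambda>\<omega>. exp (c * real k * W \<omega>)) \<le> exp (real k * a * \<mu>)" .
qed


lemma tail_upper:
  assumes L: "L > 0" and mu: "\<mu> \<ge> 0"
  shows "prob {\<omega>\<in>space M. \<mu> + (L + sqrt (2*\<mu>*L)) \<le> W \<omega>} \<le> exp (- real k * L)"
proof -
  define q where "q = sqrt (2*\<mu>*L)"
  have q0: "q \<ge> 0" and q2: "q\<^sup>2 = 2*\<mu>*L" using L mu by (auto simp: q_def)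
  define s where "s = L + q"
  have s: "s > 0" using L q0 by (simp add: s_def)
  define T where "T = 2*\<mu> + s"
  have T: "T > 0" using s mu by (simp add: T_def)
  define l where "l = 2 * s / T"
  have lpos: "l > 0" using s T by (simp add: l_def)
  have l2: "l \<le> 2" using s T mu by (simp add: l_def T_def divide_le_eq)
  have ineq: "exp (l * y) \<le> 1 + (l + l\<^sup>2/2) * y" if y: "y \<in> {0..1/2}" for y
  proof -
    have y0: "0 \<le> y" and y1: "y \<le> 1/2" using y by auto
    have "l * y \<le> 2 * (1/2)" using l2 y0 y1 lpos by (intro mult_mono) auto
    hence "exp (l * y) \<le> 1 + l * y + (l * y)\<^sup>2" using lpos y0 by (intro exp_bound) auto
    also have "(l * y)\<^sup>2 = l\<^sup>2 * y * y" by (simp add: power2_eq_square)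
    also have "\<dots> \<le> l\<^sup>2 * y * (1/2)" using y0 y1 by (intro mult_left_mono) auto
    finally show ?thesis by (simp add: algebra_simps)
  qed
  note G = mgf_W[OF ineq]
  have lk: "l * real k > 0" using lpos kpos by simp
  have "prob {\<omega>\<in>space M. \<mu> + s \<le> W \<omega>} \<le> exp (- (l * real k) * (\<mu> + s)) * expectation (\<lambda>\<omega>. exp ((l * real k) * W \<omega>))"
    by (rule chernoff_space_ge[OF lk Wmeas]) (use G(2) in simp)
  also have "\<dots> \<le> exp (- (l * real k) * (\<mu> + s)) * exp (real k * (l + l\<^sup>2/2) * \<mu>)"
    by (intro mult_left_mono) (use G(1) in auto)
  also have "\<dots> = exp (- real k * (l * s - l\<^sup>2 * \<mu> / 2))"
    by (simp add: exp_add[symmetric] algebra_simps power2_eq_square)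
  also have "\<dots> \<le> exp (- real k * L)"
  proof -
    have A: "L * T \<le> s\<^sup>2"
    proof -
      have "s\<^sup>2 - L * T = L * q" unfolding s_def T_def using q2
        by (simp add: power2_eq_square algebra_simps)
      thus ?thesis using L q0 by (smt (verit) mult_nonneg_nonneg)
    qed
    have B0: "l * s - l\<^sup>2 * \<mu> / 2 - s\<^sup>2 / T = s\<^sup>2 * (T - 2*\<mu>) / T\<^sup>2"
      using T unfolding l_def by (simp add: field_simps power2_eq_square)
    have B: "l * s - l\<^sup>2 * \<mu> / 2 - s\<^sup>2 / T = s ^ 3 / T\<^sup>2"
      unfolding B0 by (simp add: T_def power2_eq_square power3_eq_cube)
    have "0 \<le> s ^ 3 / T\<^sup>2" using s T by simp
    hence "s\<^sup>2 / T \<le> l * s - l\<^sup>2 * \<mu> / 2" using B by linarith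
    moreover have "L \<le> s\<^sup>2 / T" using A T by (simp add: le_divide_eq)
    ultimately have "L \<le> l * s - l\<^sup>2 * \<mu> / 2" by linarith
    thus ?thesis by (simp add: mult_left_mono)
  qed
  finally show ?thesis by (simp add: s_def q_def)
qed

lemma tail_lower:
  assumes L: "L > 0" and mu: "\<mu> > 0"
  shows "prob {\<omega>\<in>space M. W \<omega> \<le> \<mu> - sqrt (\<mu>*L)} \<le> exp (- real k * L)"
proof -
  define s where "s = sqrt (\<mu>*L)"
  have s: "s > 0" and s2: "s\<^sup>2 = \<mu>*L" using L mu by (auto simp: s_def)
  define l where "l = 2 * s / \<mu>"
  have lpos: "l > 0" using s mu by (simp add: l_def)
  have ineq: "exp ((- l) * y) \<le> 1 + (- l + l\<^sup>2/4) * y" if y: "y \<in> {0..1/2}" for y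
  proof -
    have y0: "0 \<le> y" and y1: "y \<le> 1/2" using y by auto
    have "exp ((- l) * y) \<le> 1 - l * y + (l * y)\<^sup>2 / 2" using exp_neg_bound[of "l*y"] lpos y0 by simp
    also have "(l * y)\<^sup>2 / 2 = l\<^sup>2 * y * y / 2" by (simp add: power2_eq_square)
    also have "\<dots> \<le> l\<^sup>2 * y * (1/2) / 2" using y0 y1 by (intro divide_right_mono mult_left_mono) auto
    finally show ?thesis by (simp add: algebra_simps)
  qed
  note G = mgf_W[OF ineq]
  have lk: "l * real k > 0" using lpos kpos by simp
  have eqf: "(\<lambda>\<omega>. exp (- (l * real k) * W \<omega>)) = (\<lambda>\<omega>. exp (- l * real k * W \<omega>))" by simp
  have "prob {\<omega>\<in>space M. W \<omega> \<le> \<mu> - s} \<le> exp ((l * real k) * (\<mu> - s)) * expectation (\<lambda>\<omega>. exp (- (l * real k) * W \<omega>))"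
    by (rule chernoff_space_le[OF lk Wmeas]) (use G(2) in simp)
  also have "\<dots> \<le> exp ((l * real k) * (\<mu> - s)) * exp (real k * (- l + l\<^sup>2/4) * \<mu>)"
    unfolding eqf by (intro mult_left_mono) (use G(1) in auto)
  also have "\<dots> = exp (- real k * (l * s - l\<^sup>2 * \<mu> / 4))"
    by (simp add: exp_add[symmetric] algebra_simps power2_eq_square)
  also have "l * s - l\<^sup>2 * \<mu> / 4 = L"
    using mu s2 unfolding l_def by (simp add: field_simps power2_eq_square)
  finally show ?thesis by (simp add: s_def)
qed

end

lemma exists_permutes_image:
  assumes U: "finite U" and B: "B \<subseteq> U" and B': "B' \<subseteq> U" and c: "card B = card B'"
  shows "\<exists>\<tau>. \<tau> permutes U \<and> \<tau> ` B = B'"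
proof -
  have fB: "finite B" "finite B'" using U B B' finite_subset by auto
  obtain f where f: "bij_betw f B B'" using finite_same_card_bij[OF fB c] by blast
  have c2: "card (U - B) = card (U - B')" using c B B' U fB by (simp add: card_Diff_subset)
  obtain g where g: "bij_betw g (U - B) (U - B')"
    using finite_same_card_bij[OF _ _ c2] U by blast
  define \<tau> where "\<tau> x = (if x \<in> B then f x else if x \<in> U then g x else x)" for x
  have "bij_betw \<tau> B B'" using f by (rule bij_betw_cong[THEN iffD1, rotated]) (simp add: \<tau>_def)
  moreover have "bij_betw \<tau> (U - B) (U - B')" using g by (rule bij_betw_cong[THEN iffD1, rotated]) (simp add: \<tau>_def)
  ultimately have "bij_betw \<tau> (B \<union> (U - B)) (B' \<union> (U - B'))" by (rule bij_betw_combine) auto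
  hence "bij_betw \<tau> U U" using B B' by (simp add: Un_absorb1 Un_Diff_cancel)
  hence "\<tau> permutes U" by (rule bij_imp_permutes) (use B in \<open>auto simp: \<tau>_def\<close>)
  moreover have "\<tau> ` B = B'" using f by (auto simp: \<tau>_def bij_betw_def)
  ultimately show ?thesis by blast
qed

lemma sym_sorted:
  fixes G :: "(nat \<Rightarrow> nat) \<Rightarrow> real"
  assumes Gloc: "\<And>t t'. (\<And>i. i < q \<Longrightarrow> t i = t' i) \<Longrightarrow> G t = G t'"
    and Gsym: "\<And>t \<rho>. \<rho> permutes {..<q} \<Longrightarrow> G (t \<circ> \<rho>) = G t"
    and K: "finite K" "card K = q" and t: "bij_betw t {..<q} K"
  shows "G t = G (\<lambda>i. sorted_list_of_set K ! i)"
proof -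
  define xs where "xs = sorted_list_of_set K"
  have bx: "bij_betw ((!) xs) {..<q} K"
    by (rule bij_betw_nth) (use K in \<open>auto simp: xs_def\<close>)
  define \<rho> where "\<rho> i = (if i < q then the_inv_into {..<q} ((!) xs) (t i) else i)" for i
  have "bij_betw (the_inv_into {..<q} ((!) xs) \<circ> t) {..<q} {..<q}"
    by (rule bij_betw_trans[OF t bij_betw_the_inv_into[OF bx]])
  hence "bij_betw \<rho> {..<q} {..<q}"
    by (rule bij_betw_cong[THEN iffD1, rotated]) (simp add: \<rho>_def)
  hence rp: "\<rho> permutes {..<q}" by (rule bij_imp_permutes) (simp add: \<rho>_def)
  have "G t = G ((!) xs \<circ> \<rho>)"
  proof (rule Gloc)
    fix i assume i: "i < q"
    have "t i \<in> K" using t i by (auto simp: bij_betw_def)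
    thus "t i = ((!) xs \<circ> \<rho>) i" using i f_the_inv_into_f_bij_betw[OF bx] by (simp add: \<rho>_def)
  qed
  also have "\<dots> = G ((!) xs)" by (rule Gsym[OF rp])
  finally show ?thesis by (simp add: xs_def)
qed


lemma permutes_image_bij:
  assumes p: "p permutes U"
  shows "bij_betw (\<lambda>K. p ` K) {K. K \<subseteq> U \<and> card K = q} {K. K \<subseteq> U \<and> card K = q}"
proof (rule bij_betw_byWitness[where f'="\<lambda>K. inv p ` K"])
  have inj: "inj p" using p by (rule permutes_inj)
  have ip: "inv p permutes U" using p by (rule permutes_inv)
  have inj2: "inj (inv p)" using ip by (rule permutes_inj)
  show "\<forall>a\<in>{K. K \<subseteq> U \<and> card K = q}. inv p ` p ` a = a"
    by (auto simp: image_comp permutes_inv_o[OF p])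
  show "\<forall>a\<in>{K. K \<subseteq> U \<and> card K = q}. p ` inv p ` a = a"
    by (auto simp: image_comp permutes_inv_o[OF p])
  show "(`) p ` {K. K \<subseteq> U \<and> card K = q} \<subseteq> {K. K \<subseteq> U \<and> card K = q}"
    using inj p by (auto simp: card_image inj_on_subset permutes_in_image)
  show "(`) (inv p) ` {K. K \<subseteq> U \<and> card K = q} \<subseteq> {K. K \<subseteq> U \<and> card K = q}"
    using inj2 ip by (auto simp: card_image inj_on_subset permutes_in_image)
qed

lemma permutes_compose_bij:
  assumes t: "\<tau> permutes U"
  shows "bij_betw (\<lambda>\<pi>. \<pi> \<circ> \<tau>) {\<pi>. \<pi> permutes U} {\<pi>. \<pi> permutes U}"
proof (rule bij_betw_byWitness[where f'="\<lambda>\<pi>. \<pi> \<circ> inv \<tau>"])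
  show "\<forall>a\<in>{\<pi>. \<pi> permutes U}. a \<circ> \<tau> \<circ> inv \<tau> = a"
    by (simp add: o_assoc[symmetric] permutes_inv_o[OF t])
  show "\<forall>a\<in>{\<pi>. \<pi> permutes U}. a \<circ> inv \<tau> \<circ> \<tau> = a"
    by (simp add: o_assoc[symmetric] permutes_inv_o[OF t])
  show "(\<lambda>\<pi>. \<pi> \<circ> \<tau>) ` {\<pi>. \<pi> permutes U} \<subseteq> {\<pi>. \<pi> permutes U}"
    using t by (auto intro: permutes_compose)
  show "(\<lambda>\<pi>. \<pi> \<circ> inv \<tau>) ` {\<pi>. \<pi> permutes U} \<subseteq> {\<pi>. \<pi> permutes U}"
    using permutes_inv[OF t] by (auto intro: permutes_compose)
qed

lemma perm_sum_subsets:
  fixes F :: "nat set \<Rightarrow> real"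
  assumes B: "B \<subseteq> {..<n}" "card B = q"
  shows "real (card {K. K \<subseteq> {..<n} \<and> card K = q}) * (\<Sum>\<pi>\<in>{\<pi>. \<pi> permutes {..<n}}. F (\<pi> ` B))
         = fact n * (\<Sum>K\<in>{K. K \<subseteq> {..<n} \<and> card K = q}. F K)"
proof -
  define S where "S = {K. K \<subseteq> {..<n} \<and> card K = q}"
  define Perm where "Perm = {\<pi>. \<pi> permutes {..<n}}"
  have finS: "finite S" unfolding S_def by (rule finite_subset[of _ "Pow {..<n}"]) auto
  have finP: "finite Perm" unfolding Perm_def by (rule finite_permutations) simp
  have cP: "card Perm = fact n" unfolding Perm_def by (rule card_permutations) auto
  have inv: "(\<Sum>\<pi>\<in>Perm. F (\<pi> ` B')) = (\<Sum>\<pi>\<in>Perm. F (\<pi> ` B))" if B': "B' \<in> S" for B'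
  proof -
    obtain \<tau> where t: "\<tau> permutes {..<n}" "\<tau> ` B = B'"
      using exists_permutes_image[of "{..<n}" B B'] B B' by (auto simp: S_def)
    have "(\<Sum>\<pi>\<in>Perm. F (\<pi> ` B')) = (\<Sum>\<pi>\<in>Perm. F ((\<pi> \<circ> \<tau>) ` B))"
      by (simp add: t(2)[symmetric] image_comp)
    also have "\<dots> = (\<Sum>\<pi>\<in>Perm. F (\<pi> ` B))"
      unfolding Perm_def by (rule sum.reindex_bij_betw[OF permutes_compose_bij[OF t(1)], where g="\<lambda>\<pi>. F (\<pi> ` B)"])
    finally show ?thesis .
  qed
  have "real (card S) * (\<Sum>\<pi>\<in>Perm. F (\<pi> ` B)) = (\<Sum>B'\<in>S. \<Sum>\<pi>\<in>Perm. F (\<pi> ` B'))"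
    using inv by simp
  also have "\<dots> = (\<Sum>\<pi>\<in>Perm. \<Sum>B'\<in>S. F (\<pi> ` B'))" by (rule sum.swap)
  also have "\<dots> = (\<Sum>\<pi>\<in>Perm. \<Sum>K\<in>S. F K)"
  proof (rule sum.cong[OF refl])
    fix \<pi> assume "\<pi> \<in> Perm"
    hence p: "\<pi> permutes {..<n}" by (simp add: Perm_def)
    show "(\<Sum>B'\<in>S. F (\<pi> ` B')) = (\<Sum>K\<in>S. F K)"
      unfolding S_def by (rule sum.reindex_bij_betw[OF permutes_image_bij[OF p]])
  qed
  also have "\<dots> = fact n * (\<Sum>K\<in>S. F K)" using cP by simp
  finally show ?thesis by (simp add: S_def Perm_def)
qed


lemma aux_div1: "(a::real) \<noteq> 0 \<Longrightarrow> a * x = b \<Longrightarrow> x = b / a"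
  by (simp add: field_simps)

lemma aux_div2: "(k::real) \<noteq> 0 \<Longrightarrow> f \<noteq> 0 \<Longrightarrow> c \<noteq> 0 \<Longrightarrow> s / c = (k * (f / c * s)) / (f * k)"
  by (simp add: field_simps)

lemma hoeffding_repr:
  fixes G :: "(nat \<Rightarrow> nat) \<Rightarrow> real"
  assumes Gloc: "\<And>t t'. (\<And>i. i < q \<Longrightarrow> t i = t' i) \<Longrightarrow> G t = G t'"
    and Gsym: "\<And>t \<rho>. \<rho> permutes {..<q} \<Longrightarrow> G (t \<circ> \<rho>) = G t"
    and k: "k > 0" and qk: "q * k \<le> n"
  shows "(\<Sum>K\<in>{K. K \<subseteq> {..<n} \<and> card K = q}. G (\<lambda>i. sorted_list_of_set K ! i)) / real (n choose q)
        = (\<Sum>\<pi>\<in>{\<pi>. \<pi> permutes {..<n}}. \<Sum>j<k. G (\<lambda>i. \<pi> (q*j + i))) / (fact n * real k)"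
proof -
  define S where "S = {K. K \<subseteq> {..<n} \<and> card K = q}"
  define Perm where "Perm = {\<pi>. \<pi> permutes {..<n}}"
  define F where "F K = G (\<lambda>i. sorted_list_of_set K ! i)" for K
  have cS: "card S = n choose q" unfolding S_def using n_subsets[of "{..<n}" q] by simp
  have qn: "q \<le> n" 
  proof -
    have "q * 1 \<le> q * k" using k by (intro mult_le_mono2) (simp add: Suc_le_eq)
    thus ?thesis using qk by linarith
  qed
  have C: "real (n choose q) > 0" using qn by simp
  have step: "(\<Sum>\<pi>\<in>Perm. G (\<lambda>i. \<pi> (q*j + i))) = fact n / real (n choose q) * (\<Sum>K\<in>S. F K)"
    if j: "j < k" for j
  proof -
    define Bj where "Bj = (\<lambda>i. q*j + i) ` {..<q}"
    have Bsub: "Bj \<subseteq> {..<n}"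
    proof
      fix x assume "x \<in> Bj"
      then obtain i where i: "i < q" "x = q*j+i" by (auto simp: Bj_def)
      have "q * j + q = q * Suc j" by simp
      also have "\<dots> \<le> q * k" using j by (intro mult_le_mono2) simp
      finally show "x \<in> {..<n}" using i qk by simp
    qed
    have cB: "card Bj = q" unfolding Bj_def by (subst card_image) (auto simp: inj_on_def)
    have "(\<Sum>\<pi>\<in>Perm. G (\<lambda>i. \<pi> (q*j + i))) = (\<Sum>\<pi>\<in>Perm. F (\<pi> ` Bj))"
    proof (rule sum.cong[OF refl])
      fix \<pi> assume "\<pi> \<in> Perm"
      hence p: "\<pi> permutes {..<n}" by (simp add: Perm_def)
      have inj: "inj \<pi>" using p by (rule permutes_inj)
      have i1: "inj_on (\<lambda>i. \<pi> (q*j + i)) {..<q}"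
        by (rule inj_onI) (use injD[OF inj] in force)
      have i2: "(\<lambda>i. \<pi> (q*j + i)) ` {..<q} = \<pi> ` Bj" by (simp add: Bj_def image_image)
      have bij: "bij_betw (\<lambda>i. \<pi> (q*j + i)) {..<q} (\<pi> ` Bj)"
        unfolding bij_betw_def using i1 i2 by blast
      have fin: "finite (\<pi> ` Bj)" unfolding Bj_def by simp
      have c: "card (\<pi> ` Bj) = q" using cB card_image[OF inj_on_subset[OF inj subset_UNIV]] by simp
      show "G (\<lambda>i. \<pi> (q*j + i)) = F (\<pi> ` Bj)"
        unfolding F_def by (rule sym_sorted[OF Gloc Gsym fin c bij])
    qed
    also have "\<dots> = fact n / real (n choose q) * (\<Sum>K\<in>S. F K)"
    proof -
      have h: "real (n choose q) * (\<Sum>\<pi>\<in>Perm. F (\<pi> ` Bj)) = fact n * (\<Sum>K\<in>S. F K)"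
        using perm_sum_subsets[OF Bsub cB, of F] cS unfolding S_def Perm_def by simp
      show ?thesis using aux_div1[OF _ h] C by simp
    qed
    finally show ?thesis .
  qed
  have "(\<Sum>\<pi>\<in>Perm. \<Sum>j<k. G (\<lambda>i. \<pi> (q*j + i))) = (\<Sum>j<k. \<Sum>\<pi>\<in>Perm. G (\<lambda>i. \<pi> (q*j + i)))"
    by (rule sum.swap)
  also have "\<dots> = (\<Sum>j<k. fact n / real (n choose q) * (\<Sum>K\<in>S. F K))"
    using step by simp
  also have "\<dots> = real k * (fact n / real (n choose q) * (\<Sum>K\<in>S. F K))" by simp
  finally have eq: "(\<Sum>\<pi>\<in>Perm. \<Sum>j<k. G (\<lambda>i. \<pi> (q*j + i))) = real k * (fact n / real (n choose q) * (\<Sum>K\<in>S. F K))" .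
  have l: "(\<Sum>K\<in>S. G (\<lambda>i. sorted_list_of_set K ! i)) = (\<Sum>K\<in>S. F K)" by (simp add: F_def)
  have "(\<Sum>K\<in>S. F K) / real (n choose q) = real k * (fact n / real (n choose q) * (\<Sum>K\<in>S. F K)) / (fact n * real k)"
    by (rule aux_div2) (use k C in auto)
  thus ?thesis using l eq unfolding S_def Perm_def by simp
qed

locale iid_setting = prob_space +
  fixes X :: "nat \<Rightarrow> 'a \<Rightarrow> 'b::topological_space" and n :: nat
  assumes Xm: "\<And>i. i < n \<Longrightarrow> X i \<in> borel_measurable M"
    and ind: "indep_vars (\<lambda>_. borel) X {..<n}"
    and ident: "\<And>i. i < n \<Longrightarrow> distr M borel (X i) = distr M borel (X 0)"
begin

lemma tuple_indep:
  assumes p: "inj_on p {..<r}" "p ` {..<r} \<subseteq> {..<n}"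
  shows "indep_vars (\<lambda>_. borel) (\<lambda>i \<omega>. X (p i) \<omega>) {..<r}"
proof -
  have d: "disjoint_family_on (\<lambda>i. {p i}) {..<r}"
    using p(1) by (auto simp: disjoint_family_on_def inj_on_def)
  have "indep_vars (\<lambda>i. PiM {p i} (\<lambda>_. borel)) (\<lambda>i \<omega>. restrict (\<lambda>l. X l \<omega>) {p i}) {..<r}"
    by (rule indep_vars_restrict[OF ind _ d]) (use p(2) in auto)
  hence "indep_vars (\<lambda>_. borel) (\<lambda>i \<omega>. (\<lambda>z. z (p i)) (restrict (\<lambda>l. X l \<omega>) {p i})) {..<r}"
    by (rule indep_vars_compose2) (rule measurable_component_singleton, simp)
  thus ?thesis by simp
qed

lemma tuple_distr:
  assumes p: "inj_on p {..<r}" "p ` {..<r} \<subseteq> {..<n}" and r: "r > 0"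
  shows "distr M (PiM {..<r} (\<lambda>_. borel)) (\<lambda>\<omega>. restrict (\<lambda>i. X (p i) \<omega>) {..<r})
         = PiM {..<r} (\<lambda>_. distr M borel (X 0))"
proof -
  have rv: "i \<in> {..<r} \<Longrightarrow> random_variable borel (X (p i))" for i
    using p(2) Xm by auto
  have "distr M (PiM {..<r} (\<lambda>_. borel)) (\<lambda>\<omega>. restrict (\<lambda>i. X (p i) \<omega>) {..<r})
        = PiM {..<r} (\<lambda>i. distr M borel (X (p i)))"
    by (rule indep_vars_iff_distr_eq_PiM'[where I="{..<r}" and M'="\<lambda>_. borel" and X="\<lambda>i. X (p i)", THEN iffD1,
        OF _ rv tuple_indep[OF p]]) (use r in auto)
  also have "\<dots> = PiM {..<r} (\<lambda>_. distr M borel (X 0))"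
    by (rule PiM_cong) (use p(2) ident in auto)
  finally show ?thesis .
qed

lemma tuple_integral:
  fixes f :: "(nat \<Rightarrow> 'b) \<Rightarrow> real"
  assumes p: "inj_on p {..<r}" "p ` {..<r} \<subseteq> {..<n}" and r: "r > 0" and rn: "r \<le> n"
    and f: "f \<in> borel_measurable (PiM {..<r} (\<lambda>_. borel))"
  shows "expectation (\<lambda>\<omega>. f (restrict (\<lambda>i. X (p i) \<omega>) {..<r}))
       = expectation (\<lambda>\<omega>. f (restrict (\<lambda>i. X i \<omega>) {..<r}))"
proof -
  have m1: "(\<lambda>\<omega>. restrict (\<lambda>i. X (p i) \<omega>) {..<r}) \<in> measurable M (PiM {..<r} (\<lambda>_. borel))"
    by (rule measurable_restrict) (use p(2) Xm in auto)
  have m2: "(\<lambda>\<omega>. restrict (\<lambda>i. X i \<omega>) {..<r}) \<in> measurable M (PiM {..<r} (\<lambda>_. borel))"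
    by (rule measurable_restrict) (use rn Xm in auto)
  have id: "inj_on (\<lambda>i. i) {..<r}" "(\<lambda>i. i) ` {..<r} \<subseteq> {..<n}" using rn by auto
  have "expectation (\<lambda>\<omega>. f (restrict (\<lambda>i. X (p i) \<omega>) {..<r})) =
        integral\<^sup>L (distr M (PiM {..<r} (\<lambda>_. borel)) (\<lambda>\<omega>. restrict (\<lambda>i. X (p i) \<omega>) {..<r})) f"
    by (rule integral_distr[OF m1 f, symmetric])
  also have "\<dots> = integral\<^sup>L (distr M (PiM {..<r} (\<lambda>_. borel)) (\<lambda>\<omega>. restrict (\<lambda>i. X i \<omega>) {..<r})) f"
    using tuple_distr[OF p r] tuple_distr[OF id r] by simp
  also have "\<dots> = expectation (\<lambda>\<omega>. f (restrict (\<lambda>i. X i \<omega>) {..<r}))"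
    by (rule integral_distr[OF m2 f])
  finally show ?thesis .
qed


lemma bdd_integrable:
  fixes f :: "'a \<Rightarrow> real"
  assumes "f \<in> borel_measurable M" "\<And>\<omega>. \<bar>f \<omega>\<bar> \<le> c"
  shows "integrable M f"
  by (rule integrable_const_bound[where B=c]) (use assms in auto)

lemma h_tuple_meas:
  assumes hm: "h \<in> borel_measurable (PiM {..<m} (\<lambda>_. borel))"
    and q: "\<And>i. i < m \<Longrightarrow> q i < n"
  shows "(\<lambda>\<omega>. h (restrict (\<lambda>i. X (q i) \<omega>) {..<m})) \<in> borel_measurable M"
proof -
  have "(\<lambda>\<omega>. restrict (\<lambda>i. X (q i) \<omega>) {..<m}) \<in> measurable M (PiM {..<m} (\<lambda>_. borel))"
    by (rule measurable_restrict) (use q Xm in auto)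
  from measurable_compose[OF this hm] show ?thesis by (simp add: comp_def)
qed

lemma eta_mean:
  fixes h :: "(nat \<Rightarrow> 'b) \<Rightarrow> real"
  assumes m: "m \<ge> 1" and hm: "h \<in> borel_measurable (PiM {..<m} (\<lambda>_. borel))" and hr: "\<And>x. h x \<in> {0..1}"
    and p: "inj_on p {..<2*m}" "p ` {..<2*m} \<subseteq> {..<n}"
  shows "expectation (\<lambda>\<omega>. eta m h (\<lambda>i. X (p i) \<omega>)) = variance (\<lambda>\<omega>. h (restrict (\<lambda>i. X i \<omega>) {..<m}))"
proof -
  define A where "A \<omega> = h (restrict (\<lambda>i. X (p i) \<omega>) {..<m})" for \<omega>
  define B where "B \<omega> = h (restrict (\<lambda>i. X (p (m+i)) \<omega>) {..<m})" for \<omega>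
  define H where "H \<omega> = h (restrict (\<lambda>i. X i \<omega>) {..<m})" for \<omega>
  have c2: "2*m \<le> n" using card_inj_on_le[OF p] by simp
  have mn: "m \<le> n" using c2 by simp
  have pn: "p i < n" if "i < 2*m" for i using p(2) that by auto
  have pA: "inj_on p {..<m}" "p ` {..<m} \<subseteq> {..<n}" using p(1) pn by (auto intro: inj_on_subset)
  have pB1: "inj_on (\<lambda>i. p (m+i)) {..<m}"
  proof (rule inj_onI)
    fix x y assume xy: "x \<in> {..<m}" "y \<in> {..<m}" and e: "p (m+x) = p (m+y)"
    have "m + x = m + y" by (rule inj_onD[OF p(1) e]) (use xy in auto)
    thus "x = y" by simp
  qed
  have pB2: "(\<lambda>i. p (m+i)) ` {..<m} \<subseteq> {..<n}" using pn by auto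
  note pB = pB1 pB2
  have hb: "\<bar>h x\<bar> \<le> 1" for x using hr[of x] by auto
  have hb2: "\<bar>(h x)\<^sup>2\<bar> \<le> 1" for x using hr[of x] by (auto simp: abs_le_square_iff power_le_one)
  have hb3: "(h x)\<^sup>2 \<le> 1" for x using hb2[of x] by simp
  have hm2: "(\<lambda>z. (h z)\<^sup>2) \<in> borel_measurable (PiM {..<m} (\<lambda>_. borel))" using hm by measurable
  have mA: "A \<in> borel_measurable M" unfolding A_def by (rule h_tuple_meas[OF hm]) (use pn in auto)
  have mB: "B \<in> borel_measurable M" unfolding B_def by (rule h_tuple_meas[OF hm]) (use pn in auto)
  have mH: "H \<in> borel_measurable M" unfolding H_def by (rule h_tuple_meas[OF hm]) (use mn in auto)
  have iA: "integrable M A" by (rule bdd_integrable[OF mA, where c=1]) (simp add: A_def hb)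
  have iB: "integrable M B" by (rule bdd_integrable[OF mB, where c=1]) (simp add: B_def hb)
  have iH: "integrable M H" by (rule bdd_integrable[OF mH, where c=1]) (simp add: H_def hb)
  have mA2: "(\<lambda>\<omega>. (A \<omega>)\<^sup>2) \<in> borel_measurable M" using mA by measurable
  have iA2: "integrable M (\<lambda>\<omega>. (A \<omega>)\<^sup>2)" by (rule bdd_integrable[OF mA2, where c=1]) (simp add: A_def hb3)
  have mB2: "(\<lambda>\<omega>. (B \<omega>)\<^sup>2) \<in> borel_measurable M" using mB by measurable
  have iB2: "integrable M (\<lambda>\<omega>. (B \<omega>)\<^sup>2)" by (rule bdd_integrable[OF mB2, where c=1]) (simp add: B_def hb3)
  have mH2: "(\<lambda>\<omega>. (H \<omega>)\<^sup>2) \<in> borel_measurable M" using mH by measurable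
  have iH2: "integrable M (\<lambda>\<omega>. (H \<omega>)\<^sup>2)" by (rule bdd_integrable[OF mH2, where c=1]) (simp add: H_def hb3)
  have iAB: "integrable M (\<lambda>\<omega>. A \<omega> * B \<omega>)"
  proof (rule bdd_integrable[where c=1])
    show "(\<lambda>\<omega>. A \<omega> * B \<omega>) \<in> borel_measurable M" using mA mB by measurable
    fix \<omega> show "\<bar>A \<omega> * B \<omega>\<bar> \<le> 1"
      unfolding abs_mult by (rule mult_le_one) (auto simp: A_def B_def hb)
  qed
  have m0: "m > 0" using m by simp
  have EA: "expectation A = expectation H"
    unfolding A_def H_def by (rule tuple_integral[OF pA m0 mn hm])
  have EB: "expectation B = expectation H"
    unfolding B_def H_def by (rule tuple_integral[OF pB m0 mn hm])
  have EA2: "expectation (\<lambda>\<omega>. (A \<omega>)\<^sup>2) = expectation (\<lambda>\<omega>. (H \<omega>)\<^sup>2)"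
    unfolding A_def H_def by (rule tuple_integral[OF pA m0 mn hm2])
  have EB2: "expectation (\<lambda>\<omega>. (B \<omega>)\<^sup>2) = expectation (\<lambda>\<omega>. (H \<omega>)\<^sup>2)"
    unfolding B_def H_def by (rule tuple_integral[OF pB m0 mn hm2])
  have indV: "indep_vars (\<lambda>_. borel) (\<lambda>i \<omega>. X (p i) \<omega>) {..<2*m}" by (rule tuple_indep[OF p])
  have iv: "indep_var (PiM {..<m} (\<lambda>_. borel)) (\<lambda>\<omega>. restrict (\<lambda>i. X (p i) \<omega>) {..<m})
                      (PiM {m..<2*m} (\<lambda>_. borel)) (\<lambda>\<omega>. restrict (\<lambda>i. X (p i) \<omega>) {m..<2*m})"
    by (rule indep_var_restrict[OF indV]) auto
  define Y2 where "Y2 z = h (restrict (\<lambda>i. z (m+i)) {..<m})" for z :: "nat \<Rightarrow> 'b"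
  have mY2: "Y2 \<in> borel_measurable (PiM {m..<2*m} (\<lambda>_. borel))"
  proof -
    have eqY: "Y2 = (\<lambda>z. h (restrict (\<lambda>i. z (m+i)) {..<m}))" by (simp add: fun_eq_iff Y2_def)
    have "(\<lambda>z. restrict (\<lambda>i. z (m+i)) {..<m}) \<in> measurable (PiM {m..<2*m} (\<lambda>_. borel)) (PiM {..<m} (\<lambda>_. borel))"
      by (rule measurable_restrict) (auto intro!: measurable_component_singleton)
    from measurable_compose[OF this hm] show ?thesis by (simp add: comp_def eqY)
  qed
  have ivAB': "indep_var borel (h \<circ> (\<lambda>\<omega>. restrict (\<lambda>i. X (p i) \<omega>) {..<m}))
                         borel (Y2 \<circ> (\<lambda>\<omega>. restrict (\<lambda>i. X (p i) \<omega>) {m..<2*m}))"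
    by (rule indep_var_compose[OF iv hm mY2])
  have e1: "h \<circ> (\<lambda>\<omega>. restrict (\<lambda>i. X (p i) \<omega>) {..<m}) = A" by (simp add: A_def comp_def fun_eq_iff)
  have e2: "Y2 \<circ> (\<lambda>\<omega>. restrict (\<lambda>i. X (p i) \<omega>) {m..<2*m}) = B"
  proof
    fix \<omega>
    have "restrict (\<lambda>i. restrict (\<lambda>i. X (p i) \<omega>) {m..<2*m} (m+i)) {..<m} = restrict (\<lambda>i. X (p (m+i)) \<omega>) {..<m}"
      by (rule restrict_ext) auto
    thus "(Y2 \<circ> (\<lambda>\<omega>. restrict (\<lambda>i. X (p i) \<omega>) {m..<2*m})) \<omega> = B \<omega>" by (simp add: Y2_def B_def)
  qed
  have ivAB: "indep_var borel A borel B" using ivAB' e1 e2 by simp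
  have EAB: "expectation (\<lambda>\<omega>. A \<omega> * B \<omega>) = expectation A * expectation B"
    by (rule indep_var_lebesgue_integral[OF ivAB iA iB])
  have eta_eq: "eta m h (\<lambda>i. X (p i) \<omega>) = (1/2) * (A \<omega>)\<^sup>2 - A \<omega> * B \<omega> + (1/2) * (B \<omega>)\<^sup>2" for \<omega>
    by (simp add: eta_def A_def B_def power2_eq_square algebra_simps)
  have "expectation (\<lambda>\<omega>. eta m h (\<lambda>i. X (p i) \<omega>))
        = (1/2) * expectation (\<lambda>\<omega>. (A \<omega>)\<^sup>2) - expectation (\<lambda>\<omega>. A \<omega> * B \<omega>) + (1/2) * expectation (\<lambda>\<omega>. (B \<omega>)\<^sup>2)"
    unfolding eta_eq using iA2 iB2 iAB by simp
  also have "\<dots> = expectation (\<lambda>\<omega>. (H \<omega>)\<^sup>2) - (expectation H)\<^sup>2"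
    unfolding EAB EA EB EA2 EB2 by (simp add: power2_eq_square)
  also have "\<dots> = variance H" by (rule variance_eq[OF iH iH2, symmetric])
  also have "H = (\<lambda>\<omega>. h (restrict (\<lambda>i. X i \<omega>) {..<m}))" by (simp add: fun_eq_iff H_def)
  finally show ?thesis .
qed

end

lemma eta_loc:
  assumes "\<And>i. i < 2*m \<Longrightarrow> x i = y i"
  shows "eta m h x = eta m h y"
proof -
  have "restrict x {..<m} = restrict y {..<m}" by (rule restrict_ext) (use assms in auto)
  moreover have "restrict (\<lambda>i. x (m+i)) {..<m} = restrict (\<lambda>i. y (m+i)) {..<m}"
    by (rule restrict_ext) (use assms in auto)
  ultimately show ?thesis by (simp add: eta_def)
qed

lemma eta_range:
  assumes "\<And>x. h x \<in> {0..1}"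
  shows "eta m h x \<in> {0..1/2}"
proof -
  have a: "\<bar>h (restrict x {..<m}) - h (restrict (\<lambda>i. x (m+i)) {..<m})\<bar> \<le> 1"
    using assms[of "restrict x {..<m}"] assms[of "restrict (\<lambda>i. x (m+i)) {..<m}"] by auto
  have "(h (restrict x {..<m}) - h (restrict (\<lambda>i. x (m+i)) {..<m}))\<^sup>2 \<le> 1"
    using a by (simp add: abs_square_le_1)
  thus ?thesis by (auto simp: eta_def)
qed

lemma eta_meas:
  assumes hm: "h \<in> borel_measurable (PiM {..<m} (\<lambda>_. borel))"
  shows "eta m h \<in> borel_measurable (PiM {..<2*m} (\<lambda>_. borel))"
proof -
  have r1: "(\<lambda>z. restrict z {..<m}) \<in> measurable (PiM {..<2*m} (\<lambda>_. borel :: 'a::topological_space measure)) (PiM {..<m} (\<lambda>_. borel))"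
    by (rule measurable_restrict) (auto intro!: measurable_component_singleton)
  have r2: "(\<lambda>z. restrict (\<lambda>i. z (m+i)) {..<m}) \<in> measurable (PiM {..<2*m} (\<lambda>_. borel :: 'a::topological_space measure)) (PiM {..<m} (\<lambda>_. borel))"
    by (rule measurable_restrict) (auto intro!: measurable_component_singleton)
  have a: "(\<lambda>z. h (restrict z {..<m})) \<in> borel_measurable (PiM {..<2*m} (\<lambda>_. borel))"
    using measurable_compose[OF r1 hm] by (simp add: comp_def)
  have b: "(\<lambda>z. h (restrict (\<lambda>i. z (m+i)) {..<m})) \<in> borel_measurable (PiM {..<2*m} (\<lambda>_. borel))"
    using measurable_compose[OF r2 hm] by (simp add: comp_def)
  have "(\<lambda>z. (1/2) * (h (restrict z {..<m}) - h (restrict (\<lambda>i. z (m+i)) {..<m}))\<^sup>2) \<in> borel_measurable (PiM {..<2*m} (\<lambda>_. borel))"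
    using a b by measurable
  moreover have "eta m h = (\<lambda>z. (1/2) * (h (restrict z {..<m}) - h (restrict (\<lambda>i. z (m+i)) {..<m}))\<^sup>2)"
    by (simp add: fun_eq_iff eta_def)
  ultimately show ?thesis by simp
qed

lemma eta_tilde_loc:
  assumes "\<And>i. i < 2*m \<Longrightarrow> x i = y i"
  shows "eta_tilde m h x = eta_tilde m h y"
proof -
  have "eta m h (x \<circ> \<pi>) = eta m h (y \<circ> \<pi>)" if "\<pi> permutes {..<2*m}" for \<pi>
    by (rule eta_loc) (use assms permutes_in_image[OF that] in auto)
  thus ?thesis unfolding eta_tilde_def by (intro arg_cong2[where f="(*)"] refl sum.cong) auto
qed

lemma card_perms2m: "real (card {\<pi>. \<pi> permutes {..<2*m}}) = fact (2*m)"
  using card_permutations[of "{..<2*m}" "2*m"] by simp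

lemma eta_tilde_range:
  assumes "\<And>x. h x \<in> {0..1}"
  shows "eta_tilde m h x \<in> {0..1/2}"
proof -
  let ?P = "{\<pi>. \<pi> permutes {..<2*m}}"
  have fin: "finite ?P" by (rule finite_permutations) simp
  have s1: "(\<Sum>\<pi>\<in>?P. eta m h (x \<circ> \<pi>)) \<le> (\<Sum>\<pi>\<in>?P. 1/2)"
    using eta_range[where h=h, OF assms] by (intro sum_mono) auto
  have s0: "0 \<le> (\<Sum>\<pi>\<in>?P. eta m h (x \<circ> \<pi>))"
    using eta_range[where h=h, OF assms] by (intro sum_nonneg) auto
  have f: "fact (2*m) > (0::real)" by simp
  have "(\<Sum>\<pi>\<in>?P. (1/2::real)) = fact (2*m) / 2" using card_perms2m[of m] by simp
  with s1 have "(\<Sum>\<pi>\<in>?P. eta m h (x \<circ> \<pi>)) \<le> fact (2*m) / 2" by simp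
  hence "(1 / fact (2*m)) * (\<Sum>\<pi>\<in>?P. eta m h (x \<circ> \<pi>)) \<le> 1/2"
    using f by (simp add: field_simps)
  moreover have "0 \<le> (1 / fact (2*m)) * (\<Sum>\<pi>\<in>?P. eta m h (x \<circ> \<pi>))" using s0 f by simp
  ultimately show ?thesis by (simp add: eta_tilde_def)
qed

lemma eta_tilde_meas:
  assumes hm: "h \<in> borel_measurable (PiM {..<m} (\<lambda>_. borel))"
  shows "eta_tilde m h \<in> borel_measurable (PiM {..<2*m} (\<lambda>_. borel :: 'a::topological_space measure))"
proof -
  let ?P = "{\<pi>. \<pi> permutes {..<2*m}}"
  have each: "(\<lambda>z. eta m h (restrict (z \<circ> \<pi>) {..<2*m})) \<in> borel_measurable (PiM {..<2*m} (\<lambda>_. borel :: 'a measure))"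
    if p: "\<pi> permutes {..<2*m}" for \<pi>
  proof -
    have "(\<lambda>z. restrict (z \<circ> \<pi>) {..<2*m}) \<in> measurable (PiM {..<2*m} (\<lambda>_. borel :: 'a measure)) (PiM {..<2*m} (\<lambda>_. borel))"
    proof (rule measurable_restrict)
      fix i assume "i \<in> {..<2*m}"
      hence "\<pi> i \<in> {..<2*m}" using permutes_in_image[OF p] by simp
      thus "(\<lambda>z. (z \<circ> \<pi>) i) \<in> measurable (PiM {..<2*m} (\<lambda>_. borel :: 'a measure)) borel"
        by (simp add: comp_def measurable_component_singleton)
    qed
    from measurable_compose[OF this eta_meas[OF hm]] show ?thesis by (simp add: comp_def)
  qed
  have "(\<lambda>z. (1 / fact (2*m)) * (\<Sum>\<pi>\<in>?P. eta m h (restrict (z \<circ> \<pi>) {..<2*m}))) \<in> borel_measurable (PiM {..<2*m} (\<lambda>_. borel :: 'a measure))"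
    using each by (intro borel_measurable_times borel_measurable_const borel_measurable_sum) auto
  moreover have "eta_tilde m h = (\<lambda>z. (1 / fact (2*m)) * (\<Sum>\<pi>\<in>?P. eta m h (restrict (z \<circ> \<pi>) {..<2*m})))"
  proof
    fix z :: "nat \<Rightarrow> 'a"
    have "eta m h (z \<circ> \<pi>) = eta m h (restrict (z \<circ> \<pi>) {..<2*m})" for \<pi>
      by (rule eta_loc) simp
    thus "eta_tilde m h z = (1 / fact (2*m)) * (\<Sum>\<pi>\<in>?P. eta m h (restrict (z \<circ> \<pi>) {..<2*m}))"
      by (simp add: eta_tilde_def)
  qed
  ultimately show ?thesis by simp
qed

lemma eta_tilde_sym: "kernel_symmetric (2*m) (eta_tilde m h)"
  unfolding kernel_symmetric_def
proof (intro allI impI)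
  fix x :: "nat \<Rightarrow> 'a" and \<rho> assume r: "\<rho> permutes {..<2*m}"
  let ?P = "{\<pi>. \<pi> permutes {..<2*m}}"
  have "eta_tilde m h (restrict (x \<circ> \<rho>) {..<2*m}) = eta_tilde m h (x \<circ> \<rho>)"
    by (rule eta_tilde_loc) simp
  also have "\<dots> = (1 / fact (2*m)) * (\<Sum>\<pi>\<in>?P. eta m h (x \<circ> (\<rho> \<circ> \<pi>)))"
    by (simp add: eta_tilde_def o_assoc)
  also have "(\<Sum>\<pi>\<in>?P. eta m h (x \<circ> (\<rho> \<circ> \<pi>))) = (\<Sum>\<pi>\<in>?P. eta m h (x \<circ> \<pi>))"
  proof (rule sum.reindex_bij_betw[where h="\<lambda>\<pi>. \<rho> \<circ> \<pi>" and g="\<lambda>\<pi>. eta m h (x \<circ> \<pi>)"])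
    show "bij_betw ((\<circ>) \<rho>) ?P ?P"
    proof (rule bij_betw_byWitness[where f'="\<lambda>\<pi>. inv \<rho> \<circ> \<pi>"])
      show "\<forall>a\<in>?P. inv \<rho> \<circ> (\<rho> \<circ> a) = a" by (simp add: o_assoc permutes_inv_o[OF r])
      show "\<forall>a\<in>?P. \<rho> \<circ> (inv \<rho> \<circ> a) = a" by (simp add: o_assoc permutes_inv_o[OF r])
      show "(\<circ>) \<rho> ` ?P \<subseteq> ?P" using r by (auto intro: permutes_compose)
      show "(\<lambda>\<pi>. inv \<rho> \<circ> \<pi>) ` ?P \<subseteq> ?P" using permutes_inv[OF r] by (auto intro: permutes_compose)
    qed
  qed
  also have "(1 / fact (2*m)) * (\<Sum>\<pi>\<in>?P. eta m h (x \<circ> \<pi>)) = eta_tilde m h x"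
    by (simp add: eta_tilde_def)
  also have "\<dots> = eta_tilde m h (restrict x {..<2*m})"
    by (rule eta_tilde_loc) simp
  finally show "eta_tilde m h (restrict (x \<circ> \<rho>) {..<2*m}) = eta_tilde m h (restrict x {..<2*m})" .
qed

lemma div_block: "i < (q::nat) \<Longrightarrow> (q*j + i) div q = j"
  by simp

context iid_setting
begin

lemma g_tuple_meas:
  fixes g :: "(nat \<Rightarrow> 'b) \<Rightarrow> real"
  assumes gm: "g \<in> borel_measurable (PiM {..<r} (\<lambda>_. borel))"
    and gloc: "\<And>x y. (\<And>i. i < r \<Longrightarrow> x i = y i) \<Longrightarrow> g x = g y"
    and q: "\<And>i. i < r \<Longrightarrow> q i < n"
  shows "(\<lambda>\<omega>. g (\<lambda>i. X (q i) \<omega>)) \<in> borel_measurable M"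
proof -
  have "(\<lambda>\<omega>. restrict (\<lambda>i. X (q i) \<omega>) {..<r}) \<in> measurable M (PiM {..<r} (\<lambda>_. borel))"
    by (rule measurable_restrict) (use q Xm in auto)
  from measurable_compose[OF this gm] have "(\<lambda>\<omega>. g (restrict (\<lambda>i. X (q i) \<omega>) {..<r})) \<in> borel_measurable M"
    by (simp add: comp_def)
  moreover have "g (restrict (\<lambda>i. X (q i) \<omega>) {..<r}) = g (\<lambda>i. X (q i) \<omega>)" for \<omega>
    by (rule gloc) simp
  ultimately show ?thesis by simp
qed

lemma eta_tilde_mean:
  fixes h :: "(nat \<Rightarrow> 'b) \<Rightarrow> real"
  assumes m: "m \<ge> 1" and hm: "h \<in> borel_measurable (PiM {..<m} (\<lambda>_. borel))" and hr: "\<And>x. h x \<in> {0..1}"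
    and p: "inj_on p {..<2*m}" "p ` {..<2*m} \<subseteq> {..<n}"
  shows "expectation (\<lambda>\<omega>. eta_tilde m h (\<lambda>i. X (p i) \<omega>)) = variance (\<lambda>\<omega>. h (restrict (\<lambda>i. X i \<omega>) {..<m}))"
proof -
  let ?P = "{\<pi>. \<pi> permutes {..<2*m}}"
  let ?V = "variance (\<lambda>\<omega>. h (restrict (\<lambda>i. X i \<omega>) {..<m}))"
  have fin: "finite ?P" by (rule finite_permutations) simp
  have pn: "p i < n" if "i < 2*m" for i using p(2) that by auto
  have each: "expectation (\<lambda>\<omega>. eta m h (\<lambda>i. X ((p \<circ> \<pi>) i) \<omega>)) = ?V"
    and inte: "integrable M (\<lambda>\<omega>. eta m h (\<lambda>i. X ((p \<circ> \<pi>) i) \<omega>))"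
    if pi: "\<pi> \<in> ?P" for \<pi>
  proof -
    have pp: "\<pi> permutes {..<2*m}" using pi by simp
    have img: "\<pi> ` {..<2*m} = {..<2*m}" by (rule permutes_image[OF pp])
    have q1: "inj_on (p \<circ> \<pi>) {..<2*m}"
      by (rule comp_inj_on) (use permutes_inj_on[OF pp] p(1) img in auto)
    have q2: "(p \<circ> \<pi>) ` {..<2*m} \<subseteq> {..<n}" 
    proof -
      have "(p \<circ> \<pi>) ` {..<2*m} = p ` (\<pi> ` {..<2*m})" by (simp add: image_comp)
      thus ?thesis using p(2) img by simp
    qed
    show "expectation (\<lambda>\<omega>. eta m h (\<lambda>i. X ((p \<circ> \<pi>) i) \<omega>)) = ?V"
      by (rule eta_mean[OF m hm hr q1 q2])
    have qn: "(p \<circ> \<pi>) i < n" if "i < 2*m" for i using q2 that by auto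
    have mm: "(\<lambda>\<omega>. eta m h (\<lambda>i. X ((p \<circ> \<pi>) i) \<omega>)) \<in> borel_measurable M"
      by (rule g_tuple_meas[OF eta_meas[OF hm] eta_loc qn]) auto
    show "integrable M (\<lambda>\<omega>. eta m h (\<lambda>i. X ((p \<circ> \<pi>) i) \<omega>))"
      by (rule bdd_integrable[OF mm, where c="1/2"]) (use eta_range[where h=h, OF hr] in fastforce)
  qed
  have eq: "eta_tilde m h (\<lambda>i. X (p i) \<omega>) = (1 / fact (2*m)) * (\<Sum>\<pi>\<in>?P. eta m h (\<lambda>i. X ((p \<circ> \<pi>) i) \<omega>))" for \<omega>
    by (simp add: eta_tilde_def comp_def)
  have "expectation (\<lambda>\<omega>. eta_tilde m h (\<lambda>i. X (p i) \<omega>))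
        = (1 / fact (2*m)) * (\<Sum>\<pi>\<in>?P. expectation (\<lambda>\<omega>. eta m h (\<lambda>i. X ((p \<circ> \<pi>) i) \<omega>)))"
    unfolding eq using inte by (simp add: Bochner_Integration.integral_sum)
  also have "\<dots> = (1 / fact (2*m)) * (\<Sum>\<pi>\<in>?P. ?V)" using each by simp
  also have "\<dots> = ?V" using card_perms2m[of m] by simp
  finally show ?thesis .
qed

end

lemma const1: "sqrt 2 / 2 + sqrt 6 / 6 \<ge> (1::real)"
proof -
  have a: "1.4 \<le> sqrt (2::real)" by (rule real_le_rsqrt) (simp add: power2_eq_square)
  have b: "2.4 \<le> sqrt (6::real)" by (rule real_le_rsqrt) (simp add: power2_eq_square)
  show ?thesis using a b by simp
qed

lemma const2: "sqrt 2 / 2 + sqrt 42 / 6 \<ge> (1::real)"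
proof -
  have b: "6 \<le> sqrt (42::real)" by (rule real_le_rsqrt) (simp add: power2_eq_square)
  have "0 \<le> sqrt (2::real)" by simp
  thus ?thesis using b by linarith
qed

lemma upper_arith:
  fixes \<sigma> r c w :: real
  assumes s: "\<sigma> \<ge> 0" and r: "r \<ge> 0" and c: "c \<ge> 1"
    and w: "w < \<sigma>\<^sup>2 + (r\<^sup>2 + sqrt (2 * \<sigma>\<^sup>2 * r\<^sup>2))"
  shows "sqrt w \<le> \<sigma> + c * r"
proof -
  have e: "sqrt (2 * \<sigma>\<^sup>2 * r\<^sup>2) = sqrt 2 * \<sigma> * r"
    using s r by (simp add: real_sqrt_mult)
  have s2: "sqrt 2 \<le> 2 * c"
  proof -
    have "sqrt (2::real) \<le> 2" by (rule real_sqrt_le_iff[THEN iffD2, of 2 4, simplified]) 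
    thus ?thesis using c by linarith
  qed
  have "sqrt 2 * \<sigma> * r \<le> 2 * c * \<sigma> * r"
    using s2 s r by (intro mult_right_mono) auto
  moreover have "r\<^sup>2 \<le> c\<^sup>2 * r\<^sup>2"
  proof -
    have "1 \<le> c\<^sup>2" using c by (simp add: one_le_power)
    thus ?thesis using r by (simp add: mult_le_cancel_right1)
  qed
  ultimately have "w \<le> (\<sigma> + c * r)\<^sup>2" using w e by (simp add: power2_eq_square algebra_simps)
  hence "sqrt w \<le> sqrt ((\<sigma> + c * r)\<^sup>2)" by (rule real_sqrt_le_mono)
  also have "\<dots> = \<sigma> + c * r" using s r c by simp
  finally show ?thesis .
qed

lemma lower_arith:
  fixes \<sigma> r c w :: real
  assumes s: "\<sigma> > 0" and r: "r \<ge> 0" and c: "c \<ge> 1" and w0: "w \<ge> 0"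
    and w: "w > \<sigma>\<^sup>2 - sqrt (\<sigma>\<^sup>2 * r\<^sup>2)"
  shows "\<sigma> \<le> sqrt w + c * r"
proof -
  have e: "sqrt (\<sigma>\<^sup>2 * r\<^sup>2) = \<sigma> * r" using s r by (simp add: real_sqrt_mult)
  have cr: "r \<le> c * r" using c r by (simp add: mult_le_cancel_right1)
  show ?thesis
  proof (cases "\<sigma> \<le> r")
    case True thus ?thesis using cr w0 by (smt (verit) real_sqrt_ge_zero)
  next
    case False
    have "(\<sigma> - r)\<^sup>2 \<le> \<sigma> * (\<sigma> - r)" using False r by (simp add: power2_eq_square mult_right_mono)
    also have "\<dots> = \<sigma>\<^sup>2 - \<sigma> * r" by (simp add: power2_eq_square algebra_simps)
    also have "\<dots> < w" using w e by simp
    finally have "sqrt ((\<sigma> - r)\<^sup>2) \<le> sqrt w" by (intro real_sqrt_le_mono) simp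
    hence "\<sigma> - r \<le> sqrt w" using False by simp
    thus ?thesis using cr by linarith
  qed
qed

context iid_setting
begin

lemma main_generic:
  fixes g :: "(nat \<Rightarrow> 'b) \<Rightarrow> real" and m :: nat and \<delta> \<mu> r :: real
  assumes m: "m \<ge> 1" and n2m: "2*m \<le> n"
    and gm: "g \<in> borel_measurable (PiM {..<2*m} (\<lambda>_. borel))"
    and gloc: "\<And>x y. (\<And>i. i < 2*m \<Longrightarrow> x i = y i) \<Longrightarrow> g x = g y"
    and gsym: "kernel_symmetric (2*m) g"
    and gr: "\<And>x. g x \<in> {0..1/2}"
    and gmean: "\<And>p. inj_on p {..<2*m} \<Longrightarrow> p ` {..<2*m} \<subseteq> {..<n} \<Longrightarrow> expectation (\<lambda>\<omega>. g (\<lambda>i. X (p i) \<omega>)) = \<mu>"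
    and mu: "\<mu> \<ge> 0" and d0: "0 < \<delta>" and d1: "\<delta> < 1"
    and r_def: "r = sqrt (1 / of_int \<lfloor>real n / real (2 * m)\<rfloor> * ln (1 / \<delta>))"
  shows "measure M {\<omega> \<in> space M. sqrt (ustat n (2*m) g X \<omega>) \<le> sqrt \<mu> + (sqrt 2 / 2 + sqrt 6 / 6) * r} \<ge> 1 - \<delta>"
    and "measure M {\<omega> \<in> space M. sqrt \<mu> \<le> sqrt (ustat n (2*m) g X \<omega>) + (sqrt 2 / 2 + sqrt 42 / 6) * r} \<ge> 1 - \<delta>"
proof -
  define q where "q = 2*m"
  define k where "k = n div q"
  have q0: "q > 0" using m by (simp add: q_def)
  have k1: "k \<ge> 1"
  proof -
    have "q div q \<le> n div q" by (rule div_le_mono) (simp add: q_def n2m)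
    thus ?thesis using q0 by (simp add: k_def)
  qed
  have qk: "q * k \<le> n" by (simp add: k_def)
  have fl: "of_int \<lfloor>real n / real (2 * m)\<rfloor> = real k"
  proof -
    have "\<lfloor>real n / real (2 * m)\<rfloor> = int (n div (2*m))"
      by (rule floor_divide_of_nat_eq[where 'a=real])
    thus ?thesis by (simp add: k_def q_def)
  qed
  define L where "L = ln (1 / \<delta>) / real k"
  have lnpos: "ln (1 / \<delta>) > 0" using d0 d1 by simp
  have L0: "L > 0" using lnpos k1 by (simp add: L_def)
  have rL: "r = sqrt L" unfolding r_def fl L_def by simp
  have r0: "r \<ge> 0" using L0 by (simp add: rL)
  have r2: "r\<^sup>2 = L" using L0 by (simp add: rL)
  have kL: "exp (- real k * L) = \<delta>" using k1 d0 by (simp add: L_def ln_div)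
  define P where "P = {\<pi>. \<pi> permutes {..<n}}"
  define Y where "Y \<pi> j \<omega> = g (\<lambda>i. X (\<pi> (q*j + i)) \<omega>)" for \<pi> j \<omega>
  define W where "W = ustat n (2*m) g X"
  have finP: "finite P" unfolding P_def by (rule finite_permutations) simp
  have neP: "P \<noteq> {}" unfolding P_def using permutes_id by blast
  have cP: "card P = fact n" unfolding P_def by (rule card_permutations) auto
  have blk: "q*j + i < n" if "j < k" "i < q" for i j
  proof -
    have "q*j + i < q*j + q" using that by simp
    also have "\<dots> = q * Suc j" by simp
    also have "\<dots> \<le> q * k" using that by (intro mult_le_mono2) simp
    finally show ?thesis using qk by simp
  qed
  have gsym': "G (t \<circ> \<rho>) = G t" if "\<rho> permutes {..<q}" and "G = (\<lambda>t. g (\<lambda>i. X (t i) \<omega>))" for G t \<rho> \<omega>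
  proof -
    have "g (\<lambda>i. X (t (\<rho> i)) \<omega>) = g (restrict ((\<lambda>i. X (t i) \<omega>) \<circ> \<rho>) {..<2*m})"
      by (rule gloc) simp
    also have "\<dots> = g (restrict (\<lambda>i. X (t i) \<omega>) {..<2*m})"
      using gsym that(1) unfolding kernel_symmetric_def q_def by blast
    also have "\<dots> = g (\<lambda>i. X (t i) \<omega>)" by (rule gloc) simp
    finally show ?thesis using that(2) by simp
  qed
  have Wdef: "W \<omega> = (\<Sum>p\<in>P. \<Sum>j<k. Y p j \<omega>) / (real (card P) * real k)" for \<omega>
  proof -
    have "W \<omega> = (\<Sum>K\<in>{K. K \<subseteq> {..<n} \<and> card K = q}. (\<lambda>t. g (\<lambda>i. X (t i) \<omega>)) (\<lambda>i. sorted_list_of_set K ! i)) / real (n choose q)"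
      by (simp add: W_def ustat_def q_def)
    also have "\<dots> = (\<Sum>\<pi>\<in>{\<pi>. \<pi> permutes {..<n}}. \<Sum>j<k. (\<lambda>t. g (\<lambda>i. X (t i) \<omega>)) (\<lambda>i. \<pi> (q*j + i))) / (fact n * real k)"
    proof (rule hoeffding_repr)
      show "(\<lambda>t. g (\<lambda>i. X (t i) \<omega>)) t = (\<lambda>t. g (\<lambda>i. X (t i) \<omega>)) t'" if "\<And>i. i < q \<Longrightarrow> t i = t' i" for t t'
        using that by (auto intro!: gloc simp: q_def)
      show "(\<lambda>t. g (\<lambda>i. X (t i) \<omega>)) (t \<circ> \<rho>) = (\<lambda>t. g (\<lambda>i. X (t i) \<omega>)) t" if "\<rho> permutes {..<q}" for t \<rho>
        by (rule gsym'[OF that refl])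
    qed (use k1 qk in auto)
    moreover have "real (card {\<pi>. \<pi> permutes {..<n}}) = fact n" using cP by (simp add: P_def)
    ultimately show ?thesis by (simp add: Y_def P_def)
  qed
  have Wmeas: "W \<in> borel_measurable M"
  proof -
    let ?S = "{K. K \<subseteq> {..<n} \<and> card K = 2*m}"
    have each: "(\<lambda>\<omega>. g (\<lambda>j. X (sorted_list_of_set K ! j) \<omega>)) \<in> borel_measurable M"
      if K: "K \<in> ?S" for K
    proof (rule g_tuple_meas[OF gm gloc])
      fix i assume i: "i < 2*m"
      have Ks: "K \<subseteq> {..<n}" and cK: "card K = 2*m" using K by auto
      have fK: "finite K" using Ks finite_subset by blast
      have len: "length (sorted_list_of_set K) = 2*m" using cK by simp
      have "sorted_list_of_set K ! i \<in> set (sorted_list_of_set K)"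
        by (rule nth_mem) (use i cK in simp)
      hence "sorted_list_of_set K ! i \<in> K" using fK by simp
      thus "sorted_list_of_set K ! i < n" using Ks by blast
    qed
    have "(\<lambda>\<omega>. \<Sum>K\<in>?S. g (\<lambda>j. X (sorted_list_of_set K ! j) \<omega>)) \<in> borel_measurable M"
      by (rule borel_measurable_sum) (rule each)
    hence "(\<lambda>\<omega>. (\<Sum>K\<in>?S. g (\<lambda>j. X (sorted_list_of_set K ! j) \<omega>)) / real (n choose (2*m))) \<in> borel_measurable M"
      by (rule borel_measurable_divide) simp
    moreover have "W = (\<lambda>\<omega>. (\<Sum>K\<in>?S. g (\<lambda>j. X (sorted_list_of_set K ! j) \<omega>)) / real (n choose (2*m)))"
      by (simp add: W_def ustat_def fun_eq_iff)
    ultimately show ?thesis by simp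
  qed
  have Wnn: "W \<omega> \<ge> 0" for \<omega>
    unfolding W_def ustat_def using gr by (intro divide_nonneg_nonneg sum_nonneg) auto
  have indepY: "indep_vars (\<lambda>_. borel) (Y \<pi>) {..<k}" if pi: "\<pi> \<in> P" for \<pi>
  proof -
    have pp: "\<pi> permutes {..<n}" using pi by (simp add: P_def)
    have inj: "inj \<pi>" by (rule permutes_inj[OF pp])
    define Kj where "Kj j = (\<lambda>i. \<pi> (q*j + i)) ` {..<q}" for j
    have memK: "\<pi> (q*j + i) \<in> Kj j" if "i < q" for i j using that by (simp add: Kj_def)
    have Ksub: "Kj j \<subseteq> {..<n}" if jk: "j \<in> {..<k}" for j
    proof
      fix x assume "x \<in> Kj j"
      then obtain i where i: "i < q" "x = \<pi> (q*j + i)" by (auto simp: Kj_def)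
      have "q*j + i \<in> {..<n}" using blk[of j i] jk i by simp
      hence "\<pi> (q*j + i) \<in> {..<n}" by (subst permutes_in_image[OF pp])
      thus "x \<in> {..<n}" using i by simp
    qed
    have disj: "disjoint_family_on Kj {..<k}"
      unfolding disjoint_family_on_def
    proof (intro ballI impI)
      fix j j' assume jj: "j \<in> {..<k}" "j' \<in> {..<k}" "j \<noteq> j'"
      show "Kj j \<inter> Kj j' = {}"
      proof (rule equals0I)
        fix x assume x: "x \<in> Kj j \<inter> Kj j'"
        from x obtain i where i: "i < q" "x = \<pi> (q*j + i)" unfolding Kj_def by blast
        from x obtain i' where i': "i' < q" "x = \<pi> (q*j' + i')" unfolding Kj_def by blast
        have "\<pi> (q*j + i) = \<pi> (q*j' + i')" using i(2) i'(2) by simp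
        hence e: "q*j + i = q*j' + i'" by (rule injD[OF inj])
        have "j = (q*j + i) div q" using div_block[OF i(1)] by simp
        also have "\<dots> = (q*j' + i') div q" using e by simp
        also have "\<dots> = j'" using div_block[OF i'(1)] by simp
        finally show False using jj(3) by simp
      qed
    qed
    have I1: "indep_vars (\<lambda>j. PiM (Kj j) (\<lambda>_. borel)) (\<lambda>j \<omega>. restrict (\<lambda>l. X l \<omega>) (Kj j)) {..<k}"
      by (rule indep_vars_restrict[OF ind Ksub disj])
    define Gj where "Gj j z = g (restrict (\<lambda>i. z (\<pi> (q*j + i))) {..<2*m})" for j and z :: "nat \<Rightarrow> 'b"
    have Gm: "Gj j \<in> borel_measurable (PiM (Kj j) (\<lambda>_. borel))" if "j \<in> {..<k}" for j
    proof -
      have "(\<lambda>z. restrict (\<lambda>i. z (\<pi> (q*j + i))) {..<2*m}) \<in> measurable (PiM (Kj j) (\<lambda>_. borel)) (PiM {..<2*m} (\<lambda>_. borel))"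
      proof (rule measurable_restrict)
        fix i assume "i \<in> {..<2*m}"
        hence "\<pi> (q*j + i) \<in> Kj j" by (intro memK) (simp add: q_def)
        thus "(\<lambda>z. z (\<pi> (q*j + i))) \<in> measurable (PiM (Kj j) (\<lambda>_. borel)) borel"
          by (rule measurable_component_singleton)
      qed
      from measurable_compose[OF this gm] show ?thesis by (simp add: Gj_def[abs_def] comp_def)
    qed
    have I2: "indep_vars (\<lambda>_. borel) (\<lambda>j \<omega>. Gj j (restrict (\<lambda>l. X l \<omega>) (Kj j))) {..<k}"
      by (rule indep_vars_compose2[OF I1 Gm])
    have eqY: "Gj j (restrict (\<lambda>l. X l \<omega>) (Kj j)) = Y \<pi> j \<omega>" if "j \<in> {..<k}" for j \<omega>
    proof -
      have "Gj j (restrict (\<lambda>l. X l \<omega>) (Kj j)) = g (restrict (\<lambda>i. X (\<pi> (q*j + i)) \<omega>) {..<2*m})"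
        unfolding Gj_def
      proof (rule arg_cong[where f=g], rule restrict_ext)
        fix i assume "i \<in> {..<2*m}"
        hence "\<pi> (q*j + i) \<in> Kj j" by (intro memK) (simp add: q_def)
        thus "restrict (\<lambda>l. X l \<omega>) (Kj j) (\<pi> (q*j + i)) = X (\<pi> (q*j + i)) \<omega>" by simp
      qed
      also have "\<dots> = Y \<pi> j \<omega>" unfolding Y_def by (rule gloc) simp
      finally show ?thesis .
    qed
    have eqY': "(\<lambda>\<omega>. Gj j (restrict (\<lambda>l. X l \<omega>) (Kj j))) = Y \<pi> j" if "j \<in> {..<k}" for j
      by (rule ext) (rule eqY[OF that])
    show ?thesis
      by (rule indep_vars_cong[THEN iffD1, OF refl eqY' refl I2])
  qed
  have meanY: "expectation (Y \<pi> j) = \<mu>" if "\<pi> \<in> P" "j < k" for \<pi> j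
  proof -
    have pp: "\<pi> permutes {..<n}" using that by (simp add: P_def)
    have inj: "inj \<pi>" by (rule permutes_inj[OF pp])
    have i1: "inj_on (\<lambda>i. \<pi> (q*j + i)) {..<2*m}"
    proof (rule inj_onI)
      fix x y assume "\<pi> (q*j + x) = \<pi> (q*j + y)"
      hence "q*j + x = q*j + y" by (rule injD[OF inj])
      thus "x = y" by simp
    qed
    have i2: "(\<lambda>i. \<pi> (q*j + i)) ` {..<2*m} \<subseteq> {..<n}"
      using blk[OF that(2)] permutes_in_image[OF pp] by (auto simp: q_def)
    show ?thesis using gmean[OF i1 i2] by (simp add: Y_def[abs_def])
  qed
  interpret B: block_setting M P k Y \<mu> W
  proof
    show "finite P" by (rule finP)
    show "P \<noteq> {}" by (rule neP)
    show "0 < k" using k1 by simp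
    show "indep_vars (\<lambda>_. borel) (Y p) {..<k}" if "p \<in> P" for p by (rule indepY[OF that])
    show "Y p j \<omega> \<in> {0..1/2}" for p j \<omega> unfolding Y_def by (rule gr)
    show "expectation (Y p j) = \<mu>" if "p \<in> P" "j < k" for p j by (rule meanY[OF that])
    show "W \<omega> = (\<Sum>p\<in>P. \<Sum>j<k. Y p j \<omega>) / (real (card P) * real k)" for \<omega> by (rule Wdef)
    show "W \<in> borel_measurable M" by (rule Wmeas)
  qed
  define \<sigma> where "\<sigma> = sqrt \<mu>"
  have \<sigma>0: "\<sigma> \<ge> 0" using mu by (simp add: \<sigma>_def)
  have \<sigma>2: "\<sigma>\<^sup>2 = \<mu>" using mu by (simp add: \<sigma>_def)
  let ?bad1 = "{\<omega>\<in>space M. \<mu> + (L + sqrt (2*\<mu>*L)) \<le> W \<omega>}"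
  have pb1: "prob ?bad1 \<le> \<delta>" using B.tail_upper[OF L0 mu] kL by simp
  have ev1: "?bad1 \<in> sets M" using Wmeas by measurable
  have sub1: "space M - ?bad1 \<subseteq> {\<omega> \<in> space M. sqrt (W \<omega>) \<le> sqrt \<mu> + (sqrt 2 / 2 + sqrt 6 / 6) * r}"
  proof (rule subsetI)
    fix \<omega> assume w: "\<omega> \<in> space M - ?bad1"
    hence "W \<omega> < \<sigma>\<^sup>2 + (r\<^sup>2 + sqrt (2 * \<sigma>\<^sup>2 * r\<^sup>2))" using \<sigma>2 r2 by auto
    from upper_arith[OF \<sigma>0 r0 const1 this]
    have "sqrt (W \<omega>) \<le> sqrt \<mu> + (sqrt 2 / 2 + sqrt 6 / 6) * r" by (simp add: \<sigma>_def)
    thus "\<omega> \<in> {\<omega> \<in> space M. sqrt (W \<omega>) \<le> sqrt \<mu> + (sqrt 2 / 2 + sqrt 6 / 6) * r}" using w by simp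
  qed
  have ev1': "{\<omega> \<in> space M. sqrt (W \<omega>) \<le> sqrt \<mu> + (sqrt 2 / 2 + sqrt 6 / 6) * r} \<in> sets M"
    using Wmeas by measurable
  have "1 - \<delta> \<le> prob (space M - ?bad1)" using prob_compl[OF ev1] pb1 by simp
  also have "\<dots> \<le> prob {\<omega> \<in> space M. sqrt (W \<omega>) \<le> sqrt \<mu> + (sqrt 2 / 2 + sqrt 6 / 6) * r}"
    by (rule finite_measure_mono[OF sub1 ev1'])
  finally show "measure M {\<omega> \<in> space M. sqrt (ustat n (2*m) g X \<omega>) \<le> sqrt \<mu> + (sqrt 2 / 2 + sqrt 6 / 6) * r} \<ge> 1 - \<delta>"
    by (simp add: W_def)
  have ev2': "{\<omega> \<in> space M. sqrt \<mu> \<le> sqrt (W \<omega>) + (sqrt 2 / 2 + sqrt 42 / 6) * r} \<in> sets M"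
    using Wmeas by measurable
  have "1 - \<delta> \<le> prob {\<omega> \<in> space M. sqrt \<mu> \<le> sqrt (W \<omega>) + (sqrt 2 / 2 + sqrt 42 / 6) * r}"
  proof (cases "\<mu> = 0")
    case True
    have "{\<omega> \<in> space M. sqrt \<mu> \<le> sqrt (W \<omega>) + (sqrt 2 / 2 + sqrt 42 / 6) * r} = space M"
      using True r0 Wnn const2 by (auto intro!: add_nonneg_nonneg mult_nonneg_nonneg)
    thus ?thesis using d0 by (simp add: prob_space)
  next
    case False
    hence mu0: "\<mu> > 0" using mu by simp
    have s0: "\<sigma> > 0" using mu0 by (simp add: \<sigma>_def)
    let ?bad2 = "{\<omega>\<in>space M. W \<omega> \<le> \<mu> - sqrt (\<mu>*L)}"
    have pb2: "prob ?bad2 \<le> \<delta>" using B.tail_lower[OF L0 mu0] kL by simp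
    have ev2: "?bad2 \<in> sets M" using Wmeas by measurable
    have sub2: "space M - ?bad2 \<subseteq> {\<omega> \<in> space M. sqrt \<mu> \<le> sqrt (W \<omega>) + (sqrt 2 / 2 + sqrt 42 / 6) * r}"
    proof (rule subsetI)
      fix \<omega> assume w: "\<omega> \<in> space M - ?bad2"
      hence "W \<omega> > \<sigma>\<^sup>2 - sqrt (\<sigma>\<^sup>2 * r\<^sup>2)" using \<sigma>2 r2 by auto
      from lower_arith[OF s0 r0 const2 Wnn this]
      have "sqrt \<mu> \<le> sqrt (W \<omega>) + (sqrt 2 / 2 + sqrt 42 / 6) * r" by (simp add: \<sigma>_def)
      thus "\<omega> \<in> {\<omega> \<in> space M. sqrt \<mu> \<le> sqrt (W \<omega>) + (sqrt 2 / 2 + sqrt 42 / 6) * r}" using w by simp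
    qed
    have "1 - \<delta> \<le> prob (space M - ?bad2)" using prob_compl[OF ev2] pb2 by simp
    also have "\<dots> \<le> prob {\<omega> \<in> space M. sqrt \<mu> \<le> sqrt (W \<omega>) + (sqrt 2 / 2 + sqrt 42 / 6) * r}"
      by (rule finite_measure_mono[OF sub2 ev2'])
    finally show ?thesis .
  qed
  thus "measure M {\<omega> \<in> space M. sqrt \<mu> \<le> sqrt (ustat n (2*m) g X \<omega>) + (sqrt 2 / 2 + sqrt 42 / 6) * r} \<ge> 1 - \<delta>"
    by (simp add: W_def)
qed

end

theorem proposition5:
  fixes M :: "'a measure"
    and X :: "nat \<Rightarrow> 'a \<Rightarrow> real ^ 'd"
    and h :: "(nat \<Rightarrow> real ^ 'd) \<Rightarrow> real"
    and m n :: nat and \<delta> :: real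
  assumes "prob_space M"
    and "\<And>i. i < n \<Longrightarrow> X i \<in> borel_measurable M"
    and "prob_space.indep_vars M (\<lambda>_. borel) X {..<n}"
    and "\<And>i. i < n \<Longrightarrow> distr M borel (X i) = distr M borel (X 0)"
    and "m \<ge> 1"
    and "h \<in> borel_measurable (PiM {..<m} (\<lambda>_. borel))"
    and "\<And>x. h x \<in> {0..1}"
    and "kernel_symmetric m h"
    and "n \<ge> 2 * m"
    and "0 < \<delta>" and "\<delta> < 1"
  defines "\<sigma>2 \<equiv> prob_space.variance M (\<lambda>\<omega>. h (restrict (\<lambda>i. X i \<omega>) {..<m}))"
    and "r \<equiv> sqrt (1 / of_int \<lfloor>real n / real (2 * m)\<rfloor> * ln (1 / \<delta>))"
    and "W \<equiv> ustat n (2 * m) (eta m h) X"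
    and "Wt \<equiv> ustat n (2 * m) (eta_tilde m h) X"
  shows "(kernel_symmetric (2 * m) (eta m h) \<longrightarrow>
            measure M {\<omega> \<in> space M. sqrt (W \<omega>) \<le> sqrt \<sigma>2 + (sqrt 2 / 2 + sqrt 6 / 6) * r} \<ge> 1 - \<delta>
          \<and> measure M {\<omega> \<in> space M. sqrt \<sigma>2 \<le> sqrt (W \<omega>) + (sqrt 2 / 2 + sqrt 42 / 6) * r} \<ge> 1 - \<delta>)
       \<and> measure M {\<omega> \<in> space M. sqrt (Wt \<omega>) \<le> sqrt \<sigma>2 + (sqrt 2 / 2 + sqrt 6 / 6) * r} \<ge> 1 - \<delta>
       \<and> measure M {\<omega> \<in> space M. sqrt \<sigma>2 \<le> sqrt (Wt \<omega>) + (sqrt 2 / 2 + sqrt 42 / 6) * r} \<ge> 1 - \<delta>"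
proof -
  interpret prob_space M by (rule assms(1))
  interpret I: iid_setting M X n
  proof
    show "X i \<in> borel_measurable M" if "i < n" for i by (rule assms(2)[OF that])
    show "indep_vars (\<lambda>_. borel) X {..<n}" by (rule assms(3))
    show "distr M borel (X i) = distr M borel (X 0)" if "i < n" for i by (rule assms(4)[OF that])
  qed
  have m: "m \<ge> 1" by (rule assms(5))
  have hm: "h \<in> borel_measurable (PiM {..<m} (\<lambda>_. borel))" by (rule assms(6))
  have hr: "\<And>x. h x \<in> {0..1}" by (rule assms(7))
  have n2m: "2*m \<le> n" using assms(9) by simp
  have mu: "\<sigma>2 \<ge> 0" unfolding \<sigma>2_def by (intro Bochner_Integration.integral_nonneg) simp
  have rr: "r = sqrt (1 / of_int \<lfloor>real n / real (2 * m)\<rfloor> * ln (1 / \<delta>))" by (simp add: r_def)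
  have meanE: "expectation (\<lambda>\<omega>. eta m h (\<lambda>i. X (p i) \<omega>)) = \<sigma>2"
    if "inj_on p {..<2*m}" "p ` {..<2*m} \<subseteq> {..<n}" for p
    unfolding \<sigma>2_def by (rule I.eta_mean[OF m hm hr that])
  have meanT: "expectation (\<lambda>\<omega>. eta_tilde m h (\<lambda>i. X (p i) \<omega>)) = \<sigma>2"
    if "inj_on p {..<2*m}" "p ` {..<2*m} \<subseteq> {..<n}" for p
    unfolding \<sigma>2_def by (rule I.eta_tilde_mean[OF m hm hr that])
  note GT = I.main_generic[where g="eta_tilde m h", OF m n2m eta_tilde_meas[OF hm] eta_tilde_loc eta_tilde_sym
              eta_tilde_range[where h=h, OF hr] meanT mu assms(10,11) rr]
  have E: "measure M {\<omega> \<in> space M. sqrt (W \<omega>) \<le> sqrt \<sigma>2 + (sqrt 2 / 2 + sqrt 6 / 6) * r} \<ge> 1 - \<delta>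
          \<and> measure M {\<omega> \<in> space M. sqrt \<sigma>2 \<le> sqrt (W \<omega>) + (sqrt 2 / 2 + sqrt 42 / 6) * r} \<ge> 1 - \<delta>"
    if sym: "kernel_symmetric (2 * m) (eta m h)"
  proof -
    note GE = I.main_generic[where g="eta m h", OF m n2m eta_meas[OF hm] eta_loc sym
              eta_range[where h=h, OF hr] meanE mu assms(10,11) rr]
    show ?thesis unfolding W_def by (intro conjI GE)
  qed
  show ?thesis
  proof (intro conjI impI)
    assume s: "kernel_symmetric (2 * m) (eta m h)"
    show "measure M {\<omega> \<in> space M. sqrt (W \<omega>) \<le> sqrt \<sigma>2 + (sqrt 2 / 2 + sqrt 6 / 6) * r} \<ge> 1 - \<delta>"
      using E[OF s] by (rule conjunct1)
    show "measure M {\<omega> \<in> space M. sqrt \<sigma>2 \<le> sqrt (W \<omega>) + (sqrt 2 / 2 + sqrt 42 / 6) * r} \<ge> 1 - \<delta>"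
      using E[OF s] by (rule conjunct2)
  next
    show "measure M {\<omega> \<in> space M. sqrt (Wt \<omega>) \<le> sqrt \<sigma>2 + (sqrt 2 / 2 + sqrt 6 / 6) * r} \<ge> 1 - \<delta>"
      unfolding Wt_def by (rule GT(1))
    show "measure M {\<omega> \<in> space M. sqrt \<sigma>2 \<le> sqrt (Wt \<omega>) + (sqrt 2 / 2 + sqrt 42 / 6) * r} \<ge> 1 - \<delta>"
      unfolding Wt_def by (rule GT(2))
  qed
qed

end
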